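(* Suppose the Drift Assumption, the Unbiased Noise Assumption and the Lipschitz Assumption hold, and that the $p$-th Moment Noise Assumption holds for every $p>1$ (with constants $A_p>0$, $B_p\ge 0$ allowed to depend on $p$). Let the step sizes be $\alpha_k=\alpha(k+K)^{-\xi}$ with constants $\alpha,K>0$ and any $\xi\in(0,1]$. Then the iterates of $x_{k+1}=x_k+\alpha_k(H(x_k)-x_k+w_k)$ converge almost surely to $x^\star$, the solution of $H(x)=x$.
   Context: Let $\|\cdot\|$ denote the Euclidean norm on $\mathbb{R}^d$ and $\langle\cdot,\cdot\rangle$ the Euclidean inner product. Let $H:\mathbb{R}^d\to\mathbb{R}^d$ and consider the stochastic approximation iteration $x_{k+1}=x_k+\alpha_k\big(H(x_k)-x_k+w_k\big)$, $k\ge 0$, where $x_0$ is an initial point, $(\alpha_k)_{k\ge0}$ are positive step sizes and $(w_k)_{k\ge0}$ are random vectors in $\mathbb{R}^d$ defined on a common probability space. Let $\mathcal F_k=\sigma(x_0,x_1,\dots,x_k)$. Drift Assumption: there is $x^\star\in\mathbb{R}^d$ with $H(x^\star)=x^\star$, a differentiable function $\Phi:\mathbb{R}^d\to[0,\infty)$ and constants $\eta,c_1,c_2,L_2>0$ such that (i) $\langle\nabla\Phi(x-x^\star),H(x)-x\rangle\le-\eta\,\Phi(x-x^\star)$ for all $x\in\mathbb{R}^d$; (ii) $\Phi(y)\le\Phi(x)+\langle\nabla\Phi(x),y-x\rangle+\frac{L_2}{2}\|y-x\|^2$ for all $x,y\in\mathbb{R}^d$; (iii) $c_1\|x-x^\star\|^2\le\Phi(x-x^\star)\le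 c_2\|x-x^\star\|^2$ for all $x\in\mathbb{R}^d$. Unbiased Noise Assumption: each $w_k$ is integrable and $\mathbb{E}[w_k\mid\mathcal F_k]=0$ almost surely for all $k\ge0$. $p$-th Moment Noise Assumption (for a given $p>1$): there are constants $A_p>0$, $B_p\ge0$ such that $\mathbb{E}[\|w_k\|^p\mid\mathcal F_k]\le A_p+B_p\|x_k-x^\star\|^p$ almost surely for all $k\ge 0$. Lipschitz Assumption: there is $C>0$ with $\|H(x)-H(y)\|\le C\|x-y\|$ for all $x,y\in\mathbb{R}^d$. *)

theory Defs
  imports "HOL-Probability.Probability"
begin

definition natural_filtration ::
  "'a measure \<Rightarrow> (nat \<Rightarrow> 'a \<Rightarrow> 'b::topological_space) \<Rightarrow> nat \<Rightarrow> 'a measure" where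
  "natural_filtration M X k =
     sigma (space M) (\<Union>i\<in>{..k}. {X i -` B \<inter> space M | B. B \<in> sets borel})"

end

theory Submission
  imports Defs
begin


lemma pow_sum_le: fixes a b :: real assumes "a \<ge> 0" "b \<ge> 0"
  shows "(a + b)^n \<le> 2^n * (a^n + b^n)"
proof -
  have "(a+b)^n \<le> (2 * max a b)^n" by (rule power_mono) (use assms in auto)
  also have "\<dots> = 2^n * (max a b)^n" by (simp add: power_mult_distrib)
  also have "(max a b)^n \<le> a^n + b^n" using assms by (cases "a \<le> b") (auto simp: max_def)
  finally show ?thesis by (simp add: mult_left_mono)
qed

lemma mixed_pow_le: fixes x y :: real assumes "x \<ge> 0" "y \<ge> 0" "j \<le> n"
  shows "x^j * y^(n-j) \<le> x^n + y^n"
proof (cases "x \<le> y")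
  case True
  have "x^j * y^(n-j) \<le> y^j * y^(n-j)" by (intro mult_right_mono power_mono) (use assms True in auto)
  also have "\<dots> = y^n" using assms by (simp add: power_add[symmetric])
  moreover have "x^n \<ge> 0" "y^n \<ge> 0" using assms by simp_all
  ultimately show ?thesis by linarith
next
  case False
  have "x^j * y^(n-j) \<le> x^j * x^(n-j)" by (intro mult_left_mono power_mono) (use assms False in auto)
  also have "\<dots> = x^n" using assms by (simp add: power_add[symmetric])
  moreover have "x^n \<ge> 0" "y^n \<ge> 0" using assms by simp_all
  ultimately show ?thesis by linarith
qed

lemma young_pow: fixes a v \<epsilon> :: real
  assumes a: "0 \<le> a" "a \<le> 1" and v: "v \<ge> 0" and e: "0 < \<epsilon>" "\<epsilon> \<le> 1" and j: "j < n" and r: "r \<ge> n - j"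
  shows "a^(Suc r) * v^j \<le> \<epsilon> * a * v^n + a^(Suc n) / \<epsilon>^n"
proof -
  have h0: "(\<epsilon> * v)^j * a^(n-j) \<le> (\<epsilon> * v)^n + a^n" by (rule mixed_pow_le) (use assms in auto)
  have e1: "\<epsilon>^n = \<epsilon>^j * \<epsilon>^(n-j)" using j by (simp add: power_add[symmetric])
  have h1: "\<epsilon>^j * (v^j * a^(n-j)) \<le> \<epsilon>^j * (\<epsilon>^(n-j) * v^n) + a^n"
    using h0 e1 by (simp add: power_mult_distrib mult.assoc)
  have epj: "\<epsilon>^j > 0" using e by simp
  have "v^j * a^(n-j) \<le> (\<epsilon>^j * (\<epsilon>^(n-j) * v^n) + a^n) / \<epsilon>^j"
    using h1 epj by (simp add: pos_le_divide_eq mult.commute)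
  also have "\<dots> = \<epsilon>^(n-j) * v^n + a^n / \<epsilon>^j" using epj e by (simp only: add_divide_distrib) simp
  finally have "v^j * a^(n-j) \<le> \<epsilon>^(n-j) * v^n + a^n / \<epsilon>^j" .
  moreover have "\<epsilon>^(n-j) \<le> \<epsilon>^1" using e j by (intro power_decreasing) auto
  moreover have "a^n / \<epsilon>^j \<le> a^n / \<epsilon>^n"
    using e a j by (intro divide_left_mono power_decreasing mult_pos_pos) auto
  ultimately have h2: "v^j * a^(n-j) \<le> \<epsilon> * v^n + a^n / \<epsilon>^n"
    using v mult_right_mono[of "\<epsilon>^(n-j)" \<epsilon> "v^n"] by simp
  have "a^r \<le> a^(n-j)" using a r by (intro power_decreasing) auto
  hence "a^r * v^j \<le> a^(n-j) * v^j" using v by (intro mult_right_mono) auto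
  also have "\<dots> \<le> \<epsilon> * v^n + a^n / \<epsilon>^n" using h2 by (simp add: mult.commute)
  finally have "a * (a^r * v^j) \<le> a * (\<epsilon> * v^n + a^n / \<epsilon>^n)" using a by (intro mult_left_mono) auto
  thus ?thesis by (simp add: algebra_simps)
qed

lemma bonferroni: fixes b :: real assumes "0 \<le> b" "b \<le> 1"
  shows "(1 - b)^n \<le> 1 - n*b + (real n)^2*b^2"
proof (induction n)
  case 0 then show ?case by simp
next
  case (Suc n)
  have "(1-b)^Suc n = (1-b) * (1-b)^n" by simp
  also have "\<dots> \<le> (1-b) * (1 - n*b + n^2*b^2)" using Suc assms by (intro mult_left_mono) auto
  also have "\<dots> \<le> 1 - Suc n * b + (real (Suc n))^2 * b^2"
  proof -
    have "(1-b) * (1 - n*b + n^2*b^2) = 1 - (n+1)*b + (n + n^2)*b^2 - n^2*b^3"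
      by (simp add: algebra_simps power2_eq_square power3_eq_cube)
    also have "\<dots> \<le> 1 - (n+1)*b + (n+1)^2 * b^2" using assms
      by (simp add: power2_eq_square power3_eq_cube algebra_simps)
    finally show ?thesis by simp
  qed
  finally show ?case .
qed

lemma binom_expand_le: fixes X Y :: real assumes X: "X \<ge> 0" and n: "n \<ge> 2"
  shows "(X + Y)^n \<le> X^n + n * X^(n-1) * Y + 2^n * (X^(n-2) * Y^2 + \<bar>Y\<bar>^n)"
proof -
  have key: "\<bar>Y\<bar>^k * X^(n-k) \<le> X^(n-2) * Y^2 + \<bar>Y\<bar>^n" if k: "2 \<le> k" "k \<le> n" for k
  proof (cases "\<bar>Y\<bar> \<le> X")
    case True
    have "\<bar>Y\<bar>^k * X^(n-k) = Y^2 * (\<bar>Y\<bar>^(k-2) * X^(n-k))"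
    proof -
      have "\<bar>Y\<bar>^k = \<bar>Y\<bar>^2 * \<bar>Y\<bar>^(k-2)" using k by (metis le_add_diff_inverse power_add)
      thus ?thesis by simp
    qed
    also have "\<dots> \<le> Y^2 * (X^(k-2) * X^(n-k))"
      using True by (intro mult_left_mono mult_right_mono power_mono) auto
    also have "\<dots> = Y^2 * X^(n-2)" using k by (simp add: power_add[symmetric])
    finally have "\<bar>Y\<bar>^k * X^(n-k) \<le> X^(n-2) * Y^2" by (simp add: mult.commute)
    moreover have "\<bar>Y\<bar>^n \<ge> 0" by simp
    ultimately show ?thesis by linarith
  next
    case False
    have "\<bar>Y\<bar>^k * X^(n-k) \<le> \<bar>Y\<bar>^k * \<bar>Y\<bar>^(n-k)"
      using False X by (intro mult_left_mono power_mono) auto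
    also have "\<dots> = \<bar>Y\<bar>^n" using k by (simp add: power_add[symmetric])
    moreover have "X^(n-2) * Y^2 \<ge> 0" using X by simp
    ultimately show ?thesis by linarith
  qed
  have bin: "(X+Y)^n = (\<Sum>k\<le>n. real (n choose k) * Y^k * X^(n-k))"
    by (subst add.commute, rule binomial_ring)
  have split: "{..n} = {0,1} \<union> {2..n}" using n by auto
  have "(\<Sum>k\<le>n. real (n choose k) * Y^k * X^(n-k)) = X^n + n * X^(n-1) * Y + (\<Sum>k=2..n. real (n choose k) * Y^k * X^(n-k))"
    by (subst split, subst sum.union_disjoint) auto
  also have "(\<Sum>k=2..n. real (n choose k) * Y^k * X^(n-k)) \<le> (\<Sum>k=2..n. real (n choose k) * (X^(n-2) * Y^2 + \<bar>Y\<bar>^n))"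
  proof (rule sum_mono)
    fix k assume "k \<in> {2..n}"
    hence "Y^k * X^(n-k) \<le> X^(n-2) * Y^2 + \<bar>Y\<bar>^n"
    proof -
      have "Y^k \<le> \<bar>Y\<bar>^k" by (metis abs_ge_self power_abs)
      hence "Y^k * X^(n-k) \<le> \<bar>Y\<bar>^k * X^(n-k)" using X by (intro mult_right_mono) auto
      thus ?thesis using key[of k] \<open>k \<in> {2..n}\<close> by simp
    qed
    thus "real (n choose k) * Y^k * X^(n-k) \<le> real (n choose k) * (X^(n-2) * Y^2 + \<bar>Y\<bar>^n)"
      by (simp add: mult.assoc mult_left_mono)
  qed
  also have "\<dots> = (\<Sum>k=2..n. real (n choose k)) * (X^(n-2) * Y^2 + \<bar>Y\<bar>^n)" by (simp add: sum_distrib_right)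
  also have "\<dots> \<le> 2^n * (X^(n-2) * Y^2 + \<bar>Y\<bar>^n)"
  proof (rule mult_right_mono)
    have "(\<Sum>k=2..n. real (n choose k)) \<le> (\<Sum>k\<le>n. real (n choose k))" by (rule sum_mono2) auto
    also have "\<dots> = 2^n" using choose_row_sum[of n] by (metis of_nat_numeral of_nat_power of_nat_sum)
    finally show "(\<Sum>k=2..n. real (n choose k)) \<le> 2^n" .
  qed (use X in auto)
  finally show ?thesis using bin by simp
qed


lemma step_ineq: fixes t :: real assumes "t \<ge> 1"
  shows "(1 - 2/t) / t^2 \<le> 1 / (t+1)^2"
proof -
  have tp: "t > 0" using assms by simp
  have "(t - 2) * (t+1)^2 \<le> t^3" using tp by (simp add: power2_eq_square power3_eq_cube algebra_simps)
  hence "(t-2)/t^3 \<le> 1/(t+1)^2" using tp by (simp add: divide_simps)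
  moreover have "(1 - 2/t) / t^2 = (t-2)/t^3" using tp by (simp add: field_simps power2_eq_square power3_eq_cube)
  ultimately show ?thesis by simp
qed

lemma seq_summable:
  fixes u a :: "nat \<Rightarrow> real" and c Kc \<alpha>0 K \<xi> :: real and n k0 :: nat
  assumes u_nonneg: "\<And>k. u k \<ge> 0"
  and rec: "\<And>k. k \<ge> k0 \<Longrightarrow> u (Suc k) \<le> (1 - c * a k) * u k + Kc * a k ^ Suc n"
  and a_def: "\<And>k. a k = \<alpha>0 * (real k + K) powr (-\<xi>)"
  and pos: "\<alpha>0 > 0" "K > 0" "0 < \<xi>" "\<xi> \<le> 1" "c > 0" "Kc \<ge> 0"
  and big: "c * \<alpha>0 \<ge> 4" "real n * \<xi> \<ge> 2"
  and tk: "\<And>k. k \<ge> k0 \<Longrightarrow> real k + K \<ge> 1" and ca: "\<And>k. k \<ge> k0 \<Longrightarrow> c * a k \<le> 1"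
  shows "summable u"
proof -
  define t where "t k = real k + K" for k
  define Mb where "Mb = max (u k0 * t k0 ^ 2) (2 * Kc * \<alpha>0 ^ n / c)"
  have "u k0 * t k0 ^ 2 \<ge> 0" using u_nonneg[of k0] by simp
  hence Mb0: "Mb \<ge> 0" unfolding Mb_def by (simp add: le_max_iff_disj)
  have bound: "u k \<le> Mb / t k ^ 2" if "k \<ge> k0" for k
    using that
  proof (induction k rule: dec_induct)
    case base
    have "t k0 > 0" using tk[of k0] unfolding t_def by simp
    then show ?case unfolding Mb_def by (simp add: pos_le_divide_eq)
  next
    case (step k)
    let ?t = "t k" and ?a = "a k"
    have t1: "?t \<ge> 1" using tk[OF step(1)] unfolding t_def by simp
    have tp: "?t > 0" using t1 by simp
    have a0: "?a > 0" using pos unfolding a_def t_def by simp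
    have "?t powr (-1) \<le> ?t powr (-\<xi>)" using t1 pos by (intro powr_mono) auto
    hence "c * \<alpha>0 * ?t powr (-1) \<le> c * \<alpha>0 * ?t powr (-\<xi>)" using pos by (intro mult_left_mono) auto
    hence "c * \<alpha>0 / ?t \<le> c * ?a" using tp unfolding a_def t_def by (simp add: powr_neg_one mult.assoc)
    moreover have "4 / ?t \<le> c * \<alpha>0 / ?t" using big(1) tp by (intro divide_right_mono) auto
    ultimately have ca4: "4 / ?t \<le> c * ?a" by linarith
    have "?a ^ n = \<alpha>0 ^ n * ?t powr (real n * (-\<xi>))"
      unfolding a_def t_def using tp unfolding t_def by (simp add: power_mult_distrib powr_power)
    also have "?t powr (real n * (-\<xi>)) \<le> ?t powr (-2)" using t1 big(2) by (intro powr_mono) auto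
    also have "?t powr (-2) = 1 / ?t^2" using tp by (simp only: powr_minus_divide powr_numeral)
    finally have an: "?a ^ n \<le> \<alpha>0 ^ n / ?t^2" using pos by (simp add: mult_left_mono)
    have "u (Suc k) \<le> (1 - c * ?a) * u k + Kc * ?a ^ Suc n" using rec[OF step(1)] .
    also have "(1 - c * ?a) * u k \<le> (1 - c * ?a) * (Mb / ?t^2)"
      using step(3) ca[OF step(1)] by (intro mult_left_mono) auto
    also have "Kc * ?a ^ Suc n = ?a * (Kc * ?a ^ n)" by simp
    also have "Kc * ?a ^ n \<le> Kc * (\<alpha>0 ^ n / ?t^2)" using an pos by (intro mult_left_mono) auto
    also have "Kc * (\<alpha>0 ^ n / ?t^2) \<le> (Mb * c / 2) / ?t^2"
    proof -
      have "2 * Kc * \<alpha>0 ^ n / c \<le> Mb" unfolding Mb_def by simp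
      hence "Kc * \<alpha>0 ^ n \<le> Mb * c / 2" using pos by (simp add: field_simps)
      hence "Kc * \<alpha>0 ^ n / ?t^2 \<le> (Mb * c / 2) / ?t^2" by (rule divide_right_mono) simp
      thus ?thesis by simp
    qed
    also have "(1 - c * ?a) * (Mb / ?t^2) + ?a * ((Mb * c / 2) / ?t^2) = (1 - c * ?a / 2) * (Mb / ?t^2)"
      using tp by (simp add: field_simps)
    also have "\<dots> \<le> (1 - 2 / ?t) * (Mb / ?t^2)"
      using ca4 Mb0 tp by (intro mult_right_mono) auto
    also have "\<dots> = Mb * ((1 - 2 / ?t) / ?t^2)" by simp
    also have "\<dots> \<le> Mb * (1 / (?t + 1)^2)" using step_ineq[OF t1] Mb0 by (intro mult_left_mono) auto
    also have "?t + 1 = t (Suc k)" unfolding t_def by simp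
    finally show ?case using a0 by (simp add: mult_left_mono)
  qed
  show ?thesis
  proof (rule summable_comparison_test')
    show "summable (\<lambda>k. Mb * inverse (real k ^ 2))"
      by (intro summable_mult inverse_power_summable) simp
    fix k assume "k \<ge> Suc k0"
    hence k: "k \<ge> k0" "k \<ge> 1" by auto
    have "norm (u k) = u k" using u_nonneg by simp
    also have "\<dots> \<le> Mb / t k ^ 2" using bound[OF k(1)] .
    also have "\<dots> \<le> Mb / real k ^ 2"
      using k pos Mb0 unfolding t_def by (intro divide_left_mono power_mono mult_pos_pos) auto
    finally show "norm (u k) \<le> Mb * inverse (real k ^ 2)" by (simp add: divide_inverse)
  qed
qed


lemma poly_bound:
  fixes \<eta> D Q :: real and n m :: nat
  assumes eta: "\<eta> > 0" and D: "D \<ge> 0" and Q: "Q \<ge> 0" and n: "n \<ge> 2" and m: "1 \<le> m" "m < n"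
  shows "\<exists>a1>0. a1 \<le> 1 \<and> (\<exists>Kc\<ge>0. \<forall>a V. 0 < a \<longrightarrow> a \<le> a1 \<longrightarrow> V \<ge> 0 \<longrightarrow>
     0 \<le> 1 - \<eta>*a + D*a^2 \<and> 1 - \<eta>*a + D*a^2 \<le> 1 \<and>
     (1 - \<eta>*a + D*a^2)^n * V^n + Q * (a^2*V^(n-1) + a^2*V^n + a^4*V^(n-2) + a^4*V^n + a^n*V^m + a^n*V^n + a^(2*n) + a^(2*n)*V^n)
       \<le> (1 - (real n * \<eta> / 2) * a) * V^n + Kc * a^(Suc n))"
proof -
  define \<epsilon> where "\<epsilon> = min 1 (\<eta> / (8 * (Q + 1)))"
  have e: "0 < \<epsilon>" "\<epsilon> \<le> 1" using eta Q unfolding \<epsilon>_def by auto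
  have Qe: "3 * Q * \<epsilon> \<le> real n * \<eta> / 4"
  proof -
    have "\<epsilon> \<le> \<eta> / (8 * (Q + 1))" unfolding \<epsilon>_def by simp
    hence "Q * \<epsilon> \<le> Q * (\<eta> / (8 * (Q + 1)))" using Q by (intro mult_left_mono) auto
    also have "\<dots> \<le> \<eta> / 8" using Q eta by (simp add: field_simps)
    finally have "3 * Q * \<epsilon> \<le> 3 * \<eta> / 8" by simp
    also have "\<dots> \<le> real n * \<eta> / 4" using n eta by (simp add: field_simps)
    finally show ?thesis .
  qed
  define G where "G = real n * D + (real n)^2 * \<eta>^2 + 4 * Q"
  have G: "G \<ge> 0" unfolding G_def using D Q by simp
  define a1 where "a1 = min (min 1 (\<eta> / (D + 1))) (min (1 / (\<eta> + 1)) (real n * \<eta> / (4 * G + 1)))"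
  have a1: "a1 > 0" "a1 \<le> 1" using eta D G n unfolding a1_def by auto
  define Kc where "Kc = Q * (3 / \<epsilon>^n + 1)"
  have Kc: "Kc \<ge> 0" unfolding Kc_def using Q e by simp
  have main: "0 \<le> 1 - \<eta>*a + D*a^2 \<and> 1 - \<eta>*a + D*a^2 \<le> 1 \<and>
     (1 - \<eta>*a + D*a^2)^n * V^n + Q * (a^2*V^(n-1) + a^2*V^n + a^4*V^(n-2) + a^4*V^n + a^n*V^m + a^n*V^n + a^(2*n) + a^(2*n)*V^n)
       \<le> (1 - (real n * \<eta> / 2) * a) * V^n + Kc * a^(Suc n)"
    if a: "0 < a" "a \<le> a1" and V: "V \<ge> 0" for a V
  proof -
    have a01: "a \<le> 1" using a a1 by simp
    have aD: "a \<le> \<eta> / (D + 1)" using a unfolding a1_def by simp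
    have ae: "a \<le> 1 / (\<eta> + 1)" using a unfolding a1_def by simp
    have aG: "a \<le> real n * \<eta> / (4 * G + 1)" using a unfolding a1_def by simp
    define b where "b = \<eta>*a - D*a^2"
    have Da: "D * a \<le> \<eta>"
    proof -
      have "a * (D + 1) \<le> \<eta>" using aD D by (simp add: pos_le_divide_eq mult.commute)
      thus ?thesis using a D by (simp add: algebra_simps)
    qed
    have b0: "b \<ge> 0" unfolding b_def using Da a by (simp add: power2_eq_square mult_right_mono mult.assoc[symmetric])
    have bea: "b \<le> \<eta> * a" unfolding b_def using D by simp
    have "\<eta> * a \<le> 1"
    proof -
      have "a * (\<eta> + 1) \<le> 1" using ae eta by (simp add: pos_le_divide_eq mult.commute)
      thus ?thesis using a by (simp add: algebra_simps)
    qed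
    hence b1: "b \<le> 1" using bea by simp
    have beta: "1 - \<eta>*a + D*a^2 = 1 - b" unfolding b_def by simp
    have bon: "(1 - b)^n \<le> 1 - n*b + (real n)^2*b^2" using bonferroni[OF b0 b1] by simp
    have "b^2 \<le> (\<eta>*a)^2" using b0 bea by (intro power_mono) auto
    hence "(real n)^2*b^2 \<le> (real n)^2*(\<eta>*a)^2" by (intro mult_left_mono) auto
    hence betan: "(1 - b)^n \<le> 1 - real n * \<eta> * a + G' * a^2" if "G' = real n * D + (real n)^2 * \<eta>^2" for G'
      using bon that unfolding b_def by (simp add: algebra_simps power_mult_distrib)
    have bn: "(1 - \<eta>*a + D*a^2)^n \<le> 1 - real n * \<eta> * a + (G - 4*Q) * a^2"
      using betan[of "G - 4*Q"] unfolding beta G_def by simp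
    have y1: "a^2 * V^(n-1) \<le> \<epsilon> * a * V^n + a^(Suc n) / \<epsilon>^n"
      using young_pow[of a V \<epsilon> "n-1" n 1] a a01 V e n by (simp add: numeral_2_eq_2)
    have y2: "a^4 * V^(n-2) \<le> \<epsilon> * a * V^n + a^(Suc n) / \<epsilon>^n"
      using young_pow[of a V \<epsilon> "n-2" n 3] a a01 V e n by (simp add: numeral_Bit0 numeral_2_eq_2 eval_nat_numeral)
    have y3: "a^n * V^m \<le> \<epsilon> * a * V^n + a^(Suc n) / \<epsilon>^n"
      using young_pow[of a V \<epsilon> m n "n-1"] a a01 V e n m by (simp add: Suc_diff_1)
    have Vn: "V^n \<ge> 0" using V by simp
    have p4: "a^4 \<le> a^2" using a a01 by (intro power_decreasing) auto
    have pn: "a^n \<le> a^2" using a a01 n by (intro power_decreasing) auto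
    have p2n: "a^(2*n) \<le> a^2" using a a01 n by (intro power_decreasing) auto
    have p2n': "a^(2*n) \<le> a^(Suc n)" using a a01 n by (intro power_decreasing) auto
    have m4: "a^4*V^n \<le> a^2*V^n" using p4 Vn by (rule mult_right_mono)
    have mn: "a^n*V^n \<le> a^2*V^n" using pn Vn by (rule mult_right_mono)
    have m2n: "a^(2*n)*V^n \<le> a^2*V^n" using p2n Vn by (rule mult_right_mono)
    have sumQ: "a^2*V^(n-1) + a^2*V^n + a^4*V^(n-2) + a^4*V^n + a^n*V^m + a^n*V^n + a^(2*n) + a^(2*n)*V^n
       \<le> 3 * (\<epsilon> * a * V^n) + 3 * (a^(Suc n) / \<epsilon>^n) + 4 * (a^2 * V^n) + a^(Suc n)"
      using y1 y2 y3 m4 mn m2n p2n' by linarith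
    have T: "(1 - \<eta>*a + D*a^2)^n * V^n + Q * (a^2*V^(n-1) + a^2*V^n + a^4*V^(n-2) + a^4*V^n + a^n*V^m + a^n*V^n + a^(2*n) + a^(2*n)*V^n)
      \<le> (1 - real n * \<eta> * a + (G - 4*Q) * a^2) * V^n + Q * (3 * (\<epsilon> * a * V^n) + 3 * (a^(Suc n) / \<epsilon>^n) + 4 * (a^2 * V^n) + a^(Suc n))"
      using mult_right_mono[OF bn Vn] mult_left_mono[OF sumQ Q] by linarith
    also have "\<dots> = (1 - real n * \<eta> * a + (G * a^2 + 3 * Q * \<epsilon> * a)) * V^n + Kc * a^(Suc n)"
      unfolding Kc_def using e by (simp add: algebra_simps add_divide_distrib)
    also have "\<dots> \<le> (1 - (real n * \<eta> / 2) * a) * V^n + Kc * a^(Suc n)"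
    proof -
      have "a * G \<le> real n * \<eta> / 4"
      proof -
        have "a * (4 * G + 1) \<le> real n * \<eta>" using aG G by (simp add: pos_le_divide_eq mult.commute)
        hence "4 * (a * G) \<le> real n * \<eta>" using a by (simp add: algebra_simps)
        thus ?thesis by simp
      qed
      hence "a * (a * G) \<le> a * (real n * \<eta> / 4)" using a by (intro mult_left_mono) auto
      moreover have "a * (3 * Q * \<epsilon>) \<le> a * (real n * \<eta> / 4)" using Qe a by (intro mult_left_mono) auto
      ultimately have "G * a^2 + 3 * Q * \<epsilon> * a \<le> real n * \<eta> / 2 * a"
        by (simp add: power2_eq_square algebra_simps)
      hence "(1 - real n * \<eta> * a + (G * a^2 + 3 * Q * \<epsilon> * a)) \<le> (1 - (real n * \<eta> / 2) * a)" by simp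
      thus ?thesis using Vn by (simp add: mult_right_mono)
    qed
    finally have fin: "(1 - \<eta>*a + D*a^2)^n * V^n + Q * (a^2*V^(n-1) + a^2*V^n + a^4*V^(n-2) + a^4*V^n + a^n*V^m + a^n*V^n + a^(2*n) + a^(2*n)*V^n)
       \<le> (1 - (real n * \<eta> / 2) * a) * V^n + Kc * a^(Suc n)" .
    have "0 \<le> 1 - \<eta>*a + D*a^2" "1 - \<eta>*a + D*a^2 \<le> 1" using beta b0 b1 by linarith+
    with fin show ?thesis by blast
  qed
  show ?thesis using a1 Kc main by blast
qed


lemma sq_sum_le: fixes p q :: real shows "(p+q)^2 \<le> 2*p^2 + 2*q^2"
proof -
  have "(p+q)^2 = 2*p^2 + 2*q^2 - (p-q)^2" by (simp add: power2_eq_square algebra_simps)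
  moreover have "(p-q)^2 \<ge> 0" by simp
  ultimately show ?thesis by linarith
qed

lemma pointwise_pow:
  fixes V V' \<beta> a s N L2 :: real and n m :: nat
  assumes V: "V \<ge> 0" and V': "V' \<ge> 0" and N: "N \<ge> 0" and L: "L2 \<ge> 0"
    and \<beta>: "0 \<le> \<beta>" "\<beta> \<le> 1" and a: "a \<ge> 0"
    and nm: "n = 2 * m" "m \<ge> 1"
    and s2: "s^2 \<le> 2 * L2 * V * N"
    and rec: "V' \<le> \<beta> * V + a * s + L2 * a^2 * N"
  shows "V'^n \<le> \<beta>^n * V^n + real n * \<beta>^(n-1) * V^(n-1) * a * s
     + (real n * L2 + 2^n * 4 * L2) * a^2 * V^(n-1) * N
     + (2^n * 2 * L2^2) * a^4 * V^(n-2) * N^2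
     + (4^n * (2 * L2)^m) * a^n * V^m * N^m
     + (4^n * L2^n) * a^(2*n) * N^n"
proof -
  have n2: "n \<ge> 2" using nm by simp
  define X where "X = \<beta> * V"
  define Y where "Y = a * s + L2 * a^2 * N"
  have X0: "X \<ge> 0" unfolding X_def using V \<beta> by simp
  have XV: "X \<le> V" unfolding X_def using V \<beta> by (simp add: mult_left_le_one_le)
  have "V'^n \<le> (X + Y)^n" using V' rec unfolding X_def Y_def by (intro power_mono) (auto simp: algebra_simps)
  also have "\<dots> \<le> X^n + n * X^(n-1) * Y + 2^n * (X^(n-2) * Y^2 + \<bar>Y\<bar>^n)"
    by (rule binom_expand_le[OF X0 n2])
  finally have s0: "V'^n \<le> X^n + n * X^(n-1) * Y + 2^n * (X^(n-2) * Y^2 + \<bar>Y\<bar>^n)" .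
  have t1: "n * X^(n-1) * Y = real n * \<beta>^(n-1) * V^(n-1) * a * s + real n * X^(n-1) * (L2 * a^2 * N)"
    unfolding X_def Y_def by (simp add: algebra_simps power_mult_distrib)
  have "X^(n-1) \<le> V^(n-1)" using X0 XV by (intro power_mono) auto
  hence t1b: "real n * X^(n-1) * (L2 * a^2 * N) \<le> real n * V^(n-1) * (L2 * a^2 * N)"
    using L N a by (intro mult_right_mono mult_left_mono) auto
  have Y2: "Y^2 \<le> 4 * L2 * a^2 * V * N + 2 * L2^2 * a^4 * N^2"
  proof -
    have "Y^2 \<le> 2 * (a * s)^2 + 2 * (L2 * a^2 * N)^2" unfolding Y_def by (rule sq_sum_le)
    also have "(a * s)^2 = a^2 * s^2" by (simp add: power_mult_distrib)
    also have "a^2 * s^2 \<le> a^2 * (2 * L2 * V * N)" using s2 by (intro mult_left_mono) auto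
    finally have "Y^2 \<le> 2 * (a^2 * (2 * L2 * V * N)) + 2 * (L2 * a^2 * N)^2" by simp
    moreover have "2 * (a^2 * (2 * L2 * V * N)) + 2 * (L2 * a^2 * N)^2 = 4 * L2 * a^2 * V * N + 2 * L2^2 * a^4 * N^2"
      by algebra
    ultimately show ?thesis by (simp only:)
  qed
  have Y2nn: "4 * L2 * a^2 * V * N + 2 * L2^2 * a^4 * N^2 \<ge> 0" using L a V N by simp
  have "X^(n-2) \<le> V^(n-2)" using X0 XV by (intro power_mono) auto
  hence "X^(n-2) * Y^2 \<le> V^(n-2) * (4 * L2 * a^2 * V * N + 2 * L2^2 * a^4 * N^2)"
    using Y2 X0 V by (intro mult_mono) auto
  also have "\<dots> = 4 * L2 * a^2 * (V^(n-2) * V) * N + 2 * L2^2 * a^4 * V^(n-2) * N^2" by (simp add: algebra_simps)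
  also have "V^(n-2) * V = V^(n-1)" using n2 by (metis One_nat_def Suc_diff_Suc Suc_le_lessD numeral_2_eq_2 power_Suc2)
  finally have t2: "X^(n-2) * Y^2 \<le> 4 * L2 * a^2 * V^(n-1) * N + 2 * L2^2 * a^4 * V^(n-2) * N^2" .
  have "\<bar>Y\<bar> \<le> \<bar>a * s\<bar> + L2 * a^2 * N" unfolding Y_def using abs_triangle_ineq[of "a * s" "L2 * a^2 * N"] L a N by simp
  hence "\<bar>Y\<bar>^n \<le> (\<bar>a * s\<bar> + L2 * a^2 * N)^n" by (intro power_mono) auto
  also have "\<dots> \<le> 2^n * (\<bar>a * s\<bar>^n + (L2 * a^2 * N)^n)" using L a N by (intro pow_sum_le) auto
  also have "\<bar>a * s\<bar>^n = ((a * s)^2)^m" using nm by (simp add: power_mult)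
  also have "((a * s)^2)^m \<le> (a^2 * (2 * L2 * V * N))^m"
  proof (rule power_mono)
    show "(a * s)^2 \<le> a^2 * (2 * L2 * V * N)" using s2 by (simp add: power_mult_distrib mult_left_mono)
  qed simp
  also have "(a^2 * (2 * L2 * V * N))^m = (2 * L2)^m * a^n * V^m * N^m"
    using nm by (simp add: power_mult_distrib power_mult[symmetric])
  also have "(L2 * a^2 * N)^n = L2^n * a^(2*n) * N^n" by (simp add: power_mult_distrib power_mult[symmetric] mult.commute)
  finally have t3: "\<bar>Y\<bar>^n \<le> 2^n * ((2 * L2)^m * a^n * V^m * N^m + L2^n * a^(2*n) * N^n)"
    using L a N V by (simp add: mult_left_mono)
  have four: "(4::real)^n = 2^n * 2^n" by (simp add: power_mult_distrib[symmetric])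
  have "V'^n \<le> \<beta>^n * V^n + (real n * \<beta>^(n-1) * V^(n-1) * a * s + real n * V^(n-1) * (L2 * a^2 * N))
      + 2^n * ((4 * L2 * a^2 * V^(n-1) * N + 2 * L2^2 * a^4 * V^(n-2) * N^2)
      + 2^n * ((2 * L2)^m * a^n * V^m * N^m + L2^n * a^(2*n) * N^n))"
  proof -
    have "X^n = \<beta>^n * V^n" unfolding X_def by (simp add: power_mult_distrib)
    moreover have "n * X^(n-1) * Y \<le> real n * \<beta>^(n-1) * V^(n-1) * a * s + real n * V^(n-1) * (L2 * a^2 * N)"
      using t1 t1b by simp
    moreover have "2^n * (X^(n-2) * Y^2 + \<bar>Y\<bar>^n) \<le> 2^n * ((4 * L2 * a^2 * V^(n-1) * N + 2 * L2^2 * a^4 * V^(n-2) * N^2)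
      + 2^n * ((2 * L2)^m * a^n * V^m * N^m + L2^n * a^(2*n) * N^n))"
      using t2 t3 by (intro mult_left_mono add_mono) auto
    ultimately show ?thesis using s0 by linarith
  qed
  also have "\<dots> = \<beta>^n * V^n + real n * \<beta>^(n-1) * V^(n-1) * a * s
     + (real n * L2 + 2^n * 4 * L2) * a^2 * V^(n-1) * N
     + (2^n * 2 * L2^2) * a^4 * V^(n-2) * N^2
     + (4^n * (2 * L2)^m) * a^n * V^m * N^m
     + (4^n * L2^n) * a^(2*n) * N^n"
    unfolding four by (simp add: algebra_simps)
  finally show ?thesis .
qed


locale sa =
  fixes M :: "'a measure"
    and x w :: "nat \<Rightarrow> 'a \<Rightarrow> 'd::euclidean_space"
    and H :: "'d \<Rightarrow> 'd"
    and xs :: "'d"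
    and \<Phi> :: "'d \<Rightarrow> real" and grad\<Phi> :: "'d \<Rightarrow> 'd"
    and \<eta> c1 c2 L2 C :: real
    and \<alpha>0 K \<xi> :: real
  assumes prob: "prob_space M"
    and x_meas: "\<And>k. x k \<in> borel_measurable M"
    and w_meas: "\<And>k. w k \<in> borel_measurable M"
    and iter: "\<And>k \<omega>. \<omega> \<in> space M \<Longrightarrow>
        x (Suc k) \<omega> = x k \<omega> + (\<alpha>0 * (real k + K) powr (- \<xi>)) *\<^sub>R (H (x k \<omega>) - x k \<omega> + w k \<omega>)"
    and alpha_pos: "\<alpha>0 > 0" and K_pos: "K > 0" and xi: "0 < \<xi>" "\<xi> \<le> 1"
    and fixpt: "H xs = xs"
    and Phi_nonneg: "\<And>y. \<Phi> y \<ge> 0"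
    and Phi_grad: "\<And>y. (\<Phi> has_derivative (\<lambda>h. grad\<Phi> y \<bullet> h)) (at y)"
    and consts_pos: "\<eta> > 0" "c1 > 0" "c2 > 0" "L2 > 0"
    and drift: "\<And>y. grad\<Phi> (y - xs) \<bullet> (H y - y) \<le> - \<eta> * \<Phi> (y - xs)"
    and smooth: "\<And>y z. \<Phi> z \<le> \<Phi> y + grad\<Phi> y \<bullet> (z - y) + L2 / 2 * (norm (z - y))\<^sup>2"
    and equiv: "\<And>y. c1 * (norm (y - xs))\<^sup>2 \<le> \<Phi> (y - xs)"
               "\<And>y. \<Phi> (y - xs) \<le> c2 * (norm (y - xs))\<^sup>2"
    and w_int: "\<And>k. integrable M (w k)"
    and unbiased: "\<And>k b. b \<in> Basis \<Longrightarrow>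
        AE \<omega> in M. real_cond_exp M (natural_filtration M x k) (\<lambda>\<omega>. w k \<omega> \<bullet> b) \<omega> = 0"
    and moments: "\<And>p::real. p > 1 \<Longrightarrow> \<exists>A B. A > 0 \<and> B \<ge> 0 \<and> (\<forall>k. AE \<omega> in M.
        nn_cond_exp M (natural_filtration M x k) (\<lambda>\<omega>. ennreal (norm (w k \<omega>) powr p)) \<omega>
          \<le> ennreal (A + B * norm (x k \<omega> - xs) powr p))"
    and C_pos: "C > 0"
    and lipschitz: "\<And>y z. norm (H y - H z) \<le> C * norm (y - z)"
begin

interpretation P: prob_space M by (rule prob)

abbreviation "F k \<equiv> natural_filtration M x k"

definition gen :: "nat \<Rightarrow> 'a set set" where
  "gen k = (\<Union>i\<in>{..k}. {x i -` B \<inter> space M | B. B \<in> sets (borel :: 'd measure)})"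

lemma gen_Pow: "gen k \<subseteq> Pow (space M)" unfolding gen_def by auto

lemma gen_sets: "gen k \<subseteq> sets M"
  unfolding gen_def using x_meas by (auto intro: measurable_sets)

lemma F_eq: "F k = sigma (space M) (gen k)"
  unfolding natural_filtration_def gen_def by simp

lemma space_F: "space (F k) = space M"
  unfolding F_eq by (simp add: space_measure_of_conv)

lemma sets_F: "sets (F k) = sigma_sets (space M) (gen k)"
  unfolding F_eq using gen_Pow by (simp add: sets_measure_of)

lemma subalg: "subalgebra M (F k)"
  unfolding subalgebra_def using space_F sets_F gen_sets sets.sigma_sets_subset by metis

lemma sfs: "sigma_finite_subalgebra M (F k)"
proof -
  have "finite_measure_subalgebra M (F k)"
    unfolding finite_measure_subalgebra_def finite_measure_subalgebra_axioms_def
    using subalg P.finite_measure_axioms by simp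
  thus ?thesis by (rule finite_measure_subalgebra_is_sigma_finite)
qed

lemma x_meas_F: assumes "j \<le> k" shows "x j \<in> borel_measurable (F k)"
proof (rule measurableI)
  fix \<omega> assume "\<omega> \<in> space (F k)" thus "x j \<omega> \<in> space borel" by simp
next
  fix B :: "'d set" assume "B \<in> sets borel"
  hence "x j -` B \<inter> space M \<in> gen k" unfolding gen_def using assms by auto
  thus "x j -` B \<inter> space (F k) \<in> sets (F k)" unfolding sets_F space_F by auto
qed

lemma Phi_cont: "continuous_on UNIV \<Phi>"
  using Phi_grad has_derivative_continuous by (metis continuous_at_imp_continuous_on)

lemma Phi_meas[measurable]: "\<Phi> \<in> borel_measurable borel"
  using Phi_cont by (rule borel_measurable_continuous_onI)

lemma grad_comp_meas: "(\<lambda>y. grad\<Phi> y \<bullet> b) \<in> borel_measurable borel"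
proof (rule borel_measurable_LIMSEQ_real)
  fix y :: 'd
  have d: "((\<lambda>t. \<Phi> (y + t *\<^sub>R b)) has_derivative (\<lambda>t. grad\<Phi> y \<bullet> (t *\<^sub>R b))) (at 0)"
  proof -
    have "((\<lambda>t::real. y + t *\<^sub>R b) has_derivative (\<lambda>t. t *\<^sub>R b)) (at 0)"
      by (auto intro!: derivative_eq_intros)
    from has_derivative_compose[OF this, of \<Phi> "\<lambda>h. grad\<Phi> y \<bullet> h"] Phi_grad[of y]
    show ?thesis by simp
  qed
  have eqf: "(\<lambda>t. grad\<Phi> y \<bullet> (t *\<^sub>R b)) = (*) (grad\<Phi> y \<bullet> b)"
    by (rule ext) (simp add: inner_scaleR_right mult.commute)
  have "((\<lambda>t. \<Phi> (y + t *\<^sub>R b)) has_real_derivative (grad\<Phi> y \<bullet> b)) (at 0)"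
    using d unfolding eqf has_field_derivative_def .
  hence lim: "((\<lambda>t. (\<Phi> (y + (0 + t) *\<^sub>R b) - \<Phi> (y + 0 *\<^sub>R b)) / t) \<longlongrightarrow> grad\<Phi> y \<bullet> b) (at 0)"
    by (simp only: DERIV_def)
  have X: "(\<lambda>i. 1 / real (Suc i)) \<longlonglongrightarrow> 0" by (rule LIMSEQ_Suc[OF lim_const_over_n])
  have "((\<lambda>t. (\<Phi> (y + (0 + t) *\<^sub>R b) - \<Phi> (y + 0 *\<^sub>R b)) / t) \<circ> (\<lambda>i. 1 / real (Suc i))) \<longlonglongrightarrow> grad\<Phi> y \<bullet> b"
    using lim X unfolding tendsto_at_iff_sequentially by auto
  thus "(\<lambda>i. (\<Phi> (y + (1 / real (Suc i)) *\<^sub>R b) - \<Phi> y) * real (Suc i)) \<longlonglongrightarrow> grad\<Phi> y \<bullet> b"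
    by (simp add: o_def)
next
  fix i :: nat
  show "(\<lambda>y. (\<Phi> (y + (1 / real (Suc i)) *\<^sub>R b) - \<Phi> y) * real (Suc i)) \<in> borel_measurable borel"
    by measurable
qed

lemma grad_meas[measurable]: "grad\<Phi> \<in> borel_measurable borel"
proof -
  have "grad\<Phi> = (\<lambda>y. \<Sum>b\<in>Basis. (grad\<Phi> y \<bullet> b) *\<^sub>R b)" by (simp add: euclidean_representation)
  moreover have "(\<lambda>y. \<Sum>b\<in>Basis. (grad\<Phi> y \<bullet> b) *\<^sub>R b) \<in> borel_measurable borel"
    using grad_comp_meas by (intro borel_measurable_sum borel_measurable_scaleR) auto
  ultimately show ?thesis by simp
qed

lemma zero_mean:
  fixes f :: "'a \<Rightarrow> 'd"
  assumes fm: "f \<in> borel_measurable (F k)" and fi: "integrable M (\<lambda>\<omega>. norm (f \<omega>) * norm (w k \<omega>))"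
  shows "(\<integral>\<omega>. f \<omega> \<bullet> w k \<omega> \<partial>M) = 0"
proof -
  interpret S: sigma_finite_subalgebra M "F k" by (rule sfs)
  have fM: "f \<in> borel_measurable M" using fm subalg by (rule measurable_from_subalg[rotated])
  have wm[measurable]: "w k \<in> borel_measurable M" by (rule w_meas)
  have each: "integrable M (\<lambda>\<omega>. (f \<omega> \<bullet> b) * (w k \<omega> \<bullet> b)) \<and> (\<integral>\<omega>. (f \<omega> \<bullet> b) * (w k \<omega> \<bullet> b) \<partial>M) = 0"
    if b: "b \<in> Basis" for b
  proof
    show int: "integrable M (\<lambda>\<omega>. (f \<omega> \<bullet> b) * (w k \<omega> \<bullet> b))"
    proof (rule Bochner_Integration.integrable_bound[OF fi])
      show "(\<lambda>\<omega>. (f \<omega> \<bullet> b) * (w k \<omega> \<bullet> b)) \<in> borel_measurable M" using fM by measurable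
      show "AE \<omega> in M. norm ((f \<omega> \<bullet> b) * (w k \<omega> \<bullet> b)) \<le> norm (norm (f \<omega>) * norm (w k \<omega>))"
        using b by (auto simp: abs_mult intro!: mult_mono Basis_le_norm)
    qed
    have fbm: "(\<lambda>\<omega>. f \<omega> \<bullet> b) \<in> borel_measurable (F k)" using fm by measurable
    have "(\<integral>\<omega>. (f \<omega> \<bullet> b) * (w k \<omega> \<bullet> b) \<partial>M) = (\<integral>\<omega>. (f \<omega> \<bullet> b) * real_cond_exp M (F k) (\<lambda>\<omega>. w k \<omega> \<bullet> b) \<omega> \<partial>M)"
      by (rule S.real_cond_exp_intg(2)[symmetric, OF int fbm]) measurable
    also have "\<dots> = (\<integral>\<omega>. 0 \<partial>M)"
      using unbiased[OF b, of k] by (intro integral_cong_AE) (use fM in auto)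
    finally show "(\<integral>\<omega>. (f \<omega> \<bullet> b) * (w k \<omega> \<bullet> b) \<partial>M) = 0" by simp
  qed
  have "(\<integral>\<omega>. f \<omega> \<bullet> w k \<omega> \<partial>M) = (\<integral>\<omega>. (\<Sum>b\<in>Basis. (f \<omega> \<bullet> b) * (w k \<omega> \<bullet> b)) \<partial>M)"
    by (intro Bochner_Integration.integral_cong refl euclidean_inner)
  also have "\<dots> = (\<Sum>b\<in>Basis. (\<integral>\<omega>. (f \<omega> \<bullet> b) * (w k \<omega> \<bullet> b) \<partial>M))"
    using each by (intro Bochner_Integration.integral_sum) auto
  also have "\<dots> = 0" using each by simp
  finally show ?thesis .
qed

end


context sa begin

interpretation P: prob_space M by (rule prob)

definition ABw :: "nat \<Rightarrow> real \<times> real" where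
  "ABw = (SOME f. \<forall>j\<ge>1. fst (f j) > 0 \<and> snd (f j) \<ge> 0 \<and> (\<forall>k. AE \<omega> in M.
        nn_cond_exp M (F k) (\<lambda>\<omega>. ennreal (norm (w k \<omega>) ^ (2*j))) \<omega>
          \<le> ennreal (fst (f j) + snd (f j) * norm (x k \<omega> - xs) ^ (2*j))))"

definition "Aw j = fst (ABw j)"
definition "Bw j = snd (ABw j)"

lemma ABw: assumes "j \<ge> 1"
  shows "Aw j > 0" "Bw j \<ge> 0" "AE \<omega> in M.
        nn_cond_exp M (F k) (\<lambda>\<omega>. ennreal (norm (w k \<omega>) ^ (2*j))) \<omega>
          \<le> ennreal (Aw j + Bw j * norm (x k \<omega> - xs) ^ (2*j))"
proof -
  have "\<forall>j. \<exists>AB. j \<ge> 1 \<longrightarrow> fst AB > 0 \<and> snd AB \<ge> 0 \<and> (\<forall>k. AE \<omega> in M.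
        nn_cond_exp M (F k) (\<lambda>\<omega>. ennreal (norm (w k \<omega>) ^ (2*j))) \<omega>
          \<le> ennreal (fst AB + snd AB * norm (x k \<omega> - xs) ^ (2*j)))"
  proof (intro allI)
    fix j :: nat
    show "\<exists>AB. j \<ge> 1 \<longrightarrow> fst AB > 0 \<and> snd AB \<ge> 0 \<and> (\<forall>k. AE \<omega> in M.
        nn_cond_exp M (F k) (\<lambda>\<omega>. ennreal (norm (w k \<omega>) ^ (2*j))) \<omega>
          \<le> ennreal (fst AB + snd AB * norm (x k \<omega> - xs) ^ (2*j)))"
    proof (cases "j \<ge> 1")
      case True
      hence "real (2*j) > 1" by simp
      from moments[OF this] obtain A B where AB: "A > 0" "B \<ge> 0" "\<forall>k. AE \<omega> in M.
        nn_cond_exp M (F k) (\<lambda>\<omega>. ennreal (norm (w k \<omega>) powr real (2*j))) \<omega>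
          \<le> ennreal (A + B * norm (x k \<omega> - xs) powr real (2*j))" by blast
      have pw: "\<And>z::real. z \<ge> 0 \<Longrightarrow> z powr real (2*j) = z ^ (2*j)" using True by (intro powr_realpow') auto
      have "(\<lambda>\<omega>. ennreal (norm (w k \<omega>) powr real (2*j))) = (\<lambda>\<omega>. ennreal (norm (w k \<omega>) ^ (2*j)))" for k
        using pw by simp
      hence "\<forall>k. AE \<omega> in M.
        nn_cond_exp M (F k) (\<lambda>\<omega>. ennreal (norm (w k \<omega>) ^ (2*j))) \<omega>
          \<le> ennreal (A + B * norm (x k \<omega> - xs) ^ (2*j))" using AB(3) pw by simp
      thus ?thesis using AB(1,2) by (intro exI[of _ "(A, B)"]) simp
    qed simp
  qed
  hence "\<exists>f. \<forall>j. j \<ge> 1 \<longrightarrow> fst (f j) > 0 \<and> snd (f j) \<ge> 0 \<and> (\<forall>k. AE \<omega> in M.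
        nn_cond_exp M (F k) (\<lambda>\<omega>. ennreal (norm (w k \<omega>) ^ (2*j))) \<omega>
          \<le> ennreal (fst (f j) + snd (f j) * norm (x k \<omega> - xs) ^ (2*j)))" by (rule choice)
  hence "\<forall>j\<ge>1. fst (ABw j) > 0 \<and> snd (ABw j) \<ge> 0 \<and> (\<forall>k. AE \<omega> in M.
        nn_cond_exp M (F k) (\<lambda>\<omega>. ennreal (norm (w k \<omega>) ^ (2*j))) \<omega>
          \<le> ennreal (fst (ABw j) + snd (ABw j) * norm (x k \<omega> - xs) ^ (2*j)))"
    unfolding ABw_def by (rule someI_ex) 
  thus "Aw j > 0" "Bw j \<ge> 0" "AE \<omega> in M.
        nn_cond_exp M (F k) (\<lambda>\<omega>. ennreal (norm (w k \<omega>) ^ (2*j))) \<omega>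
          \<le> ennreal (Aw j + Bw j * norm (x k \<omega> - xs) ^ (2*j))"
    using assms unfolding Aw_def Bw_def by auto
qed

lemma moment_int:
  fixes h :: "'a \<Rightarrow> real"
  assumes hm: "h \<in> borel_measurable (F k)" and h0: "\<And>\<omega>. h \<omega> \<ge> 0" and j: "j \<ge> 1"
    and hi: "integrable M (\<lambda>\<omega>. h \<omega> * (Aw j + Bw j * norm (x k \<omega> - xs)^(2*j)))"
  shows "integrable M (\<lambda>\<omega>. h \<omega> * norm (w k \<omega>)^(2*j))"
    "(\<integral>\<omega>. h \<omega> * norm (w k \<omega>)^(2*j) \<partial>M) \<le> (\<integral>\<omega>. h \<omega> * (Aw j + Bw j * norm (x k \<omega> - xs)^(2*j)) \<partial>M)"
proof -
  interpret S: sigma_finite_subalgebra M "F k" by (rule sfs)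
  have hM[measurable]: "h \<in> borel_measurable M" using hm subalg by (rule measurable_from_subalg[rotated])
  have wm[measurable]: "w k \<in> borel_measurable M" by (rule w_meas)
  have xm[measurable]: "x k \<in> borel_measurable M" by (rule x_meas)
  have "(\<integral>\<^sup>+\<omega>. ennreal (h \<omega> * norm (w k \<omega>)^(2*j)) \<partial>M) = (\<integral>\<^sup>+\<omega>. ennreal (h \<omega>) * ennreal (norm (w k \<omega>)^(2*j)) \<partial>M)"
    using h0 by (simp add: ennreal_mult)
  also have "\<dots> = (\<integral>\<^sup>+\<omega>. ennreal (h \<omega>) * nn_cond_exp M (F k) (\<lambda>\<omega>. ennreal (norm (w k \<omega>)^(2*j))) \<omega> \<partial>M)"
    by (rule S.nn_cond_exp_intg[symmetric]) (use hm in measurable)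
  also have "\<dots> \<le> (\<integral>\<^sup>+\<omega>. ennreal (h \<omega>) * ennreal (Aw j + Bw j * norm (x k \<omega> - xs)^(2*j)) \<partial>M)"
    using ABw(3)[OF j, of k] by (intro nn_integral_mono_AE) (auto elim!: eventually_mono intro: mult_left_mono)
  also have "\<dots> = (\<integral>\<^sup>+\<omega>. ennreal (h \<omega> * (Aw j + Bw j * norm (x k \<omega> - xs)^(2*j))) \<partial>M)"
    using h0 ABw(1,2)[OF j] by (simp add: ennreal_mult)
  also have "\<dots> = ennreal (\<integral>\<omega>. h \<omega> * (Aw j + Bw j * norm (x k \<omega> - xs)^(2*j)) \<partial>M)"
    using hi h0 ABw(1,2)[OF j] by (intro nn_integral_eq_integral) auto
  finally have le: "(\<integral>\<^sup>+\<omega>. ennreal (h \<omega> * norm (w k \<omega>)^(2*j)) \<partial>M) \<le> ennreal (\<integral>\<omega>. h \<omega> * (Aw j + Bw j * norm (x k \<omega> - xs)^(2*j)) \<partial>M)" .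
  show int: "integrable M (\<lambda>\<omega>. h \<omega> * norm (w k \<omega>)^(2*j))"
  proof (rule integrableI_bounded)
    show "(\<lambda>\<omega>. h \<omega> * norm (w k \<omega>)^(2*j)) \<in> borel_measurable M" by measurable
    have "(\<integral>\<^sup>+\<omega>. ennreal (norm (h \<omega> * norm (w k \<omega>)^(2*j))) \<partial>M) = (\<integral>\<^sup>+\<omega>. ennreal (h \<omega> * norm (w k \<omega>)^(2*j)) \<partial>M)"
      using h0 by simp
    also have "\<dots> < \<infinity>" using le by (simp add: order_le_less_trans)
    finally show "(\<integral>\<^sup>+\<omega>. ennreal (norm (h \<omega> * norm (w k \<omega>)^(2*j))) \<partial>M) < \<infinity>" .
  qed
  have "ennreal (\<integral>\<omega>. h \<omega> * norm (w k \<omega>)^(2*j) \<partial>M) = (\<integral>\<^sup>+\<omega>. ennreal (h \<omega> * norm (w k \<omega>)^(2*j)) \<partial>M)"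
    using int h0 by (intro nn_integral_eq_integral[symmetric]) auto
  with le have "ennreal (\<integral>\<omega>. h \<omega> * norm (w k \<omega>)^(2*j) \<partial>M) \<le> ennreal (\<integral>\<omega>. h \<omega> * (Aw j + Bw j * norm (x k \<omega> - xs)^(2*j)) \<partial>M)"
    by simp
  moreover have "(\<integral>\<omega>. h \<omega> * (Aw j + Bw j * norm (x k \<omega> - xs)^(2*j)) \<partial>M) \<ge> 0"
    using h0 ABw(1,2)[OF j] by (intro integral_nonneg_AE) auto
  ultimately show "(\<integral>\<omega>. h \<omega> * norm (w k \<omega>)^(2*j) \<partial>M) \<le> (\<integral>\<omega>. h \<omega> * (Aw j + Bw j * norm (x k \<omega> - xs)^(2*j)) \<partial>M)"
    by (simp add: ennreal_le_iff)
qed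

end


context sa begin

interpretation P: prob_space M by (rule prob)

declare x_meas[measurable] w_meas[measurable]

definition "a k = \<alpha>0 * (real k + K) powr (-\<xi>)"
definition "E R = {\<omega> \<in> space M. norm (x 0 \<omega> - xs) \<le> R}"

lemma a_pos: "a k > 0" unfolding a_def using alpha_pos K_pos by simp

lemma E_sets_F: "E R \<in> sets (F k)"
proof -
  have [measurable]: "x 0 \<in> borel_measurable (F k)" by (rule x_meas_F) simp
  have "{\<omega> \<in> space (F k). norm (x 0 \<omega> - xs) \<le> R} \<in> sets (F k)" by measurable
  thus ?thesis unfolding E_def space_F .
qed

lemma E_sets[measurable]: "E R \<in> sets M"
  unfolding E_def by measurable

lemma I_meas_F: "(\<lambda>\<omega>. indicator (E R) \<omega> :: real) \<in> borel_measurable (F k)"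
  using E_sets_F by (rule borel_measurable_indicator)

lemma x_step: "\<omega> \<in> space M \<Longrightarrow> x (Suc k) \<omega> - xs = (x k \<omega> - xs) + a k *\<^sub>R (H (x k \<omega>) - x k \<omega> + w k \<omega>)"
  using iter unfolding a_def by simp

lemma H_bound: "norm (H y - y) \<le> (1 + C) * norm (y - xs)"
proof -
  have "H y - y = (H y - H xs) + (xs - y)" using fixpt by simp
  hence "norm (H y - y) \<le> norm (H y - H xs) + norm (xs - y)" by (metis norm_triangle_ineq)
  also have "\<dots> \<le> C * norm (y - xs) + norm (y - xs)" using lipschitz[of y xs] by (simp add: norm_minus_commute)
  finally show ?thesis by (simp add: algebra_simps)
qed

lemma e_step: assumes "\<omega> \<in> space M"
  shows "norm (x (Suc k) \<omega> - xs) \<le> (1 + a k * (1 + C)) * norm (x k \<omega> - xs) + a k * norm (w k \<omega>)"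
proof -
  have "norm (x (Suc k) \<omega> - xs) \<le> norm (x k \<omega> - xs) + norm (a k *\<^sub>R (H (x k \<omega>) - x k \<omega> + w k \<omega>))"
    unfolding x_step[OF assms] by (rule norm_triangle_ineq)
  also have "norm (a k *\<^sub>R (H (x k \<omega>) - x k \<omega> + w k \<omega>)) = a k * norm (H (x k \<omega>) - x k \<omega> + w k \<omega>)"
    using a_pos[of k] by simp
  also have "norm (H (x k \<omega>) - x k \<omega> + w k \<omega>) \<le> (1 + C) * norm (x k \<omega> - xs) + norm (w k \<omega>)"
    using H_bound[of "x k \<omega>"] norm_triangle_ineq[of "H (x k \<omega>) - x k \<omega>" "w k \<omega>"] by linarith
  finally show ?thesis using a_pos[of k] by (simp add: algebra_simps mult_left_mono)
qed

lemma I_int: "integrable M (\<lambda>\<omega>. indicator (E R) \<omega> :: real)"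
  by (rule P.integrable_const_bound[where B=1]) auto

lemma fin_moments: "integrable M (\<lambda>\<omega>. indicator (E R) \<omega> * norm (x k \<omega> - xs)^j)"
  "integrable M (\<lambda>\<omega>. indicator (E R) \<omega> * norm (w k \<omega>)^j)"
proof -
  have we: "integrable M (\<lambda>\<omega>. indicator (E R) \<omega> * norm (w k \<omega>)^j)"
    if e: "\<And>j. integrable M (\<lambda>\<omega>. indicator (E R) \<omega> * norm (x k \<omega> - xs)^j)" for k j
  proof -
    have j1: "Suc j \<ge> 1" by simp
    have hi: "integrable M (\<lambda>\<omega>. indicator (E R) \<omega> * (Aw (Suc j) + Bw (Suc j) * norm (x k \<omega> - xs)^(2 * Suc j)))"
    proof -
      have "integrable M (\<lambda>\<omega>. Aw (Suc j) * indicator (E R) \<omega> + Bw (Suc j) * (indicator (E R) \<omega> * norm (x k \<omega> - xs)^(2 * Suc j)))"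
        by (intro Bochner_Integration.integrable_add integrable_mult_right I_int e)
      thus ?thesis by (simp add: algebra_simps)
    qed
    have w2: "integrable M (\<lambda>\<omega>. indicator (E R) \<omega> * norm (w k \<omega>)^(2 * Suc j))"
      by (rule moment_int(1)[OF I_meas_F _ j1 hi]) simp
    show ?thesis
    proof (rule Bochner_Integration.integrable_bound)
      show "integrable M (\<lambda>\<omega>. indicator (E R) \<omega> + indicator (E R) \<omega> * norm (w k \<omega>)^(2 * Suc j))"
        using I_int w2 by (rule Bochner_Integration.integrable_add)
      show "(\<lambda>\<omega>. indicator (E R) \<omega> * norm (w k \<omega>)^j) \<in> borel_measurable M" by measurable
      have "norm (w k \<omega>)^j \<le> 1 + norm (w k \<omega>)^(2 * Suc j)" for \<omega>
      proof (cases "norm (w k \<omega>) \<le> 1")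
        case True
        hence "norm (w k \<omega>)^j \<le> 1" by (simp add: power_le_one)
        thus ?thesis by (smt (verit) zero_le_power norm_ge_zero)
      next
        case False
        hence "norm (w k \<omega>)^j \<le> norm (w k \<omega>)^(2 * Suc j)" by (intro power_increasing) auto
        thus ?thesis by simp
      qed
      thus "AE \<omega> in M. norm (indicator (E R) \<omega> * norm (w k \<omega>)^j) \<le> norm (indicator (E R) \<omega> + indicator (E R) \<omega> * norm (w k \<omega>)^(2 * Suc j))"
        by (auto simp: indicator_def)
    qed
  qed
  have ee: "\<And>j. integrable M (\<lambda>\<omega>. indicator (E R) \<omega> * norm (x k \<omega> - xs)^j)"
  proof (induction k)
    case 0
    fix j
    show "integrable M (\<lambda>\<omega>. indicator (E R) \<omega> * norm (x 0 \<omega> - xs)^j)"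
    proof (rule P.integrable_const_bound[where B="max R 0 ^ j"])
      show "(\<lambda>\<omega>. indicator (E R) \<omega> * norm (x 0 \<omega> - xs)^j) \<in> borel_measurable M" by measurable
      have "norm (indicator (E R) \<omega> * norm (x 0 \<omega> - xs)^j) \<le> max R 0 ^ j" if "\<omega> \<in> space M" for \<omega>
      proof (cases "\<omega> \<in> E R")
        case True
        hence "norm (x 0 \<omega> - xs) \<le> max R 0" unfolding E_def by auto
        hence "norm (x 0 \<omega> - xs)^j \<le> max R 0 ^ j" by (intro power_mono) auto
        thus ?thesis using True by simp
      qed simp
      thus "AE \<omega> in M. norm (indicator (E R) \<omega> * norm (x 0 \<omega> - xs)^j) \<le> max R 0 ^ j" by auto
    qed
  next
    case (Suc k)
    fix j
    have wk: "integrable M (\<lambda>\<omega>. indicator (E R) \<omega> * norm (w k \<omega>)^j)" by (rule we[OF Suc.IH])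
    define ca where "ca = 1 + a k * (1 + C)"
    show "integrable M (\<lambda>\<omega>. indicator (E R) \<omega> * norm (x (Suc k) \<omega> - xs)^j)"
    proof (rule Bochner_Integration.integrable_bound)
      show "integrable M (\<lambda>\<omega>. 2^j * (ca^j * (indicator (E R) \<omega> * norm (x k \<omega> - xs)^j) + (a k)^j * (indicator (E R) \<omega> * norm (w k \<omega>)^j)))"
        using Suc.IH wk by (intro integrable_mult_right Bochner_Integration.integrable_add) auto
      show "(\<lambda>\<omega>. indicator (E R) \<omega> * norm (x (Suc k) \<omega> - xs)^j) \<in> borel_measurable M" by measurable
      have "norm (indicator (E R) \<omega> * norm (x (Suc k) \<omega> - xs)^j) \<le> norm (2^j * (ca^j * (indicator (E R) \<omega> * norm (x k \<omega> - xs)^j) + (a k)^j * (indicator (E R) \<omega> * norm (w k \<omega>)^j)))"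
        if \<omega>: "\<omega> \<in> space M" for \<omega>
      proof -
        have ca0: "ca \<ge> 0" unfolding ca_def using a_pos[of k] C_pos by simp
        have "norm (x (Suc k) \<omega> - xs)^j \<le> (ca * norm (x k \<omega> - xs) + a k * norm (w k \<omega>))^j"
          using e_step[OF \<omega>, of k] unfolding ca_def by (intro power_mono) auto
        also have "\<dots> \<le> 2^j * ((ca * norm (x k \<omega> - xs))^j + (a k * norm (w k \<omega>))^j)"
          using ca0 a_pos[of k] by (intro pow_sum_le) auto
        finally have "norm (x (Suc k) \<omega> - xs)^j \<le> 2^j * (ca^j * norm (x k \<omega> - xs)^j + (a k)^j * norm (w k \<omega>)^j)"
          by (simp add: power_mult_distrib)
        moreover have "0 \<le> 2^j * (ca^j * norm (x k \<omega> - xs)^j + (a k)^j * norm (w k \<omega>)^j)"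
          using ca0 a_pos[of k] by simp
        ultimately show ?thesis by (auto simp: indicator_def)
      qed
      thus "AE \<omega> in M. norm (indicator (E R) \<omega> * norm (x (Suc k) \<omega> - xs)^j) \<le> norm (2^j * (ca^j * (indicator (E R) \<omega> * norm (x k \<omega> - xs)^j) + (a k)^j * (indicator (E R) \<omega> * norm (w k \<omega>)^j)))"
        by auto
    qed
  qed
  show "integrable M (\<lambda>\<omega>. indicator (E R) \<omega> * norm (x k \<omega> - xs)^j)" by (rule ee)
  show "integrable M (\<lambda>\<omega>. indicator (E R) \<omega> * norm (w k \<omega>)^j)" by (rule we[OF ee])
qed

end


context sa begin

interpretation P: prob_space M by (rule prob)

definition "V k \<omega> = \<Phi> (x k \<omega> - xs)"
definition "g k \<omega> = grad\<Phi> (x k \<omega> - xs)"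
definition "Pk k \<omega> = 1 + norm (x k \<omega> - xs) + norm (w k \<omega>)"

lemma V_meas[measurable]: "V k \<in> borel_measurable M"
  unfolding V_def by measurable
lemma g_meas[measurable]: "g k \<in> borel_measurable M"
  unfolding g_def by measurable

lemma V_meas_F: "V k \<in> borel_measurable (F k)"
proof -
  have [measurable]: "x k \<in> borel_measurable (F k)" by (rule x_meas_F) simp
  show ?thesis unfolding V_def by measurable
qed
lemma g_meas_F: "g k \<in> borel_measurable (F k)"
proof -
  have [measurable]: "x k \<in> borel_measurable (F k)" by (rule x_meas_F) simp
  show ?thesis unfolding g_def by measurable
qed

lemma V_nonneg: "V k \<omega> \<ge> 0" unfolding V_def by (rule Phi_nonneg)
lemma V_lower: "c1 * (norm (x k \<omega> - xs))^2 \<le> V k \<omega>" unfolding V_def by (rule equiv(1))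
lemma V_upper: "V k \<omega> \<le> c2 * (norm (x k \<omega> - xs))^2" unfolding V_def by (rule equiv(2))

lemma grad_sq: "(norm (grad\<Phi> y))^2 \<le> 2 * L2 * \<Phi> y"
proof -
  define gg where "gg = grad\<Phi> y"
  have L: "L2 > 0" using consts_pos by simp
  have "\<Phi> (y - (1/L2) *\<^sub>R gg) \<le> \<Phi> y + gg \<bullet> (- (1/L2) *\<^sub>R gg) + L2 / 2 * (norm (- (1/L2) *\<^sub>R gg))^2"
    using smooth[of "y - (1/L2) *\<^sub>R gg" y] unfolding gg_def by simp
  also have "gg \<bullet> (- (1/L2) *\<^sub>R gg) = - ((norm gg)^2 / L2)" by (simp add: power2_norm_eq_inner)
  also have "L2 / 2 * (norm (- (1/L2) *\<^sub>R gg))^2 = (norm gg)^2 / (2 * L2)"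
    using L by (simp add: power2_eq_square field_simps)
  finally have "0 \<le> \<Phi> y + (- ((norm gg)^2 / L2)) + (norm gg)^2 / (2 * L2)" using Phi_nonneg[of "y - (1/L2) *\<^sub>R gg"] by linarith
  hence "(norm gg)^2 / (2 * L2) \<le> \<Phi> y" using L by (simp add: field_simps)
  thus ?thesis using L unfolding gg_def by (simp add: field_simps)
qed

lemma s_sq: "(g k \<omega> \<bullet> w k \<omega>)^2 \<le> 2 * L2 * V k \<omega> * (norm (w k \<omega>))^2"
proof -
  have "(g k \<omega> \<bullet> w k \<omega>)^2 \<le> (norm (g k \<omega>) * norm (w k \<omega>))^2"
  proof -
    have "\<bar>g k \<omega> \<bullet> w k \<omega>\<bar> \<le> norm (g k \<omega>) * norm (w k \<omega>)" by (rule Cauchy_Schwarz_ineq2)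
    hence "\<bar>g k \<omega> \<bullet> w k \<omega>\<bar>^2 \<le> (norm (g k \<omega>) * norm (w k \<omega>))^2" by (intro power_mono) auto
    thus ?thesis by simp
  qed
  also have "\<dots> = (norm (g k \<omega>))^2 * (norm (w k \<omega>))^2" by (simp add: power_mult_distrib)
  also have "\<dots> \<le> (2 * L2 * V k \<omega>) * (norm (w k \<omega>))^2"
    using grad_sq unfolding g_def V_def by (intro mult_right_mono) auto
  finally show ?thesis .
qed

lemma g_bound: "norm (g k \<omega>) \<le> sqrt (2 * L2 * c2) * norm (x k \<omega> - xs)"
proof -
  have "(norm (g k \<omega>))^2 \<le> 2 * L2 * (c2 * (norm (x k \<omega> - xs))^2)"
    using grad_sq[of "x k \<omega> - xs"] V_upper[of k \<omega>] consts_pos unfolding g_def V_def by (smt (verit) mult_left_mono)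
  also have "\<dots> = (sqrt (2 * L2 * c2) * norm (x k \<omega> - xs))^2"
    using consts_pos by (simp add: power_mult_distrib)
  finally show ?thesis by (rule power2_le_imp_le) (use consts_pos in auto)
qed

definition "D = L2 * (1 + C)^2 / c1"
definition "\<beta> k = 1 - \<eta> * a k + D * (a k)^2"

lemma V_step: assumes \<omega>: "\<omega> \<in> space M"
  shows "V (Suc k) \<omega> \<le> \<beta> k * V k \<omega> + a k * (g k \<omega> \<bullet> w k \<omega>) + L2 * (a k)^2 * (norm (w k \<omega>))^2"
proof -
  define e where "e = x k \<omega> - xs"
  define u where "u = H (x k \<omega>) - x k \<omega> + w k \<omega>"
  have e': "x (Suc k) \<omega> - xs = e + a k *\<^sub>R u" unfolding e_def u_def using x_step[OF \<omega>] by simp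
  have "V (Suc k) \<omega> \<le> \<Phi> e + grad\<Phi> e \<bullet> (a k *\<^sub>R u) + L2 / 2 * (norm (a k *\<^sub>R u))^2"
    unfolding V_def e' using smooth[of "e + a k *\<^sub>R u" e] by simp
  also have "grad\<Phi> e \<bullet> (a k *\<^sub>R u) = a k * (grad\<Phi> e \<bullet> (H (x k \<omega>) - x k \<omega>)) + a k * (g k \<omega> \<bullet> w k \<omega>)"
    unfolding u_def g_def e_def by (simp add: inner_add_right inner_scaleR_right algebra_simps)
  also have "a k * (grad\<Phi> e \<bullet> (H (x k \<omega>) - x k \<omega>)) \<le> a k * (- \<eta> * \<Phi> e)"
    using drift[of "x k \<omega>"] a_pos[of k] unfolding e_def by (intro mult_left_mono) auto
  also have "(norm (a k *\<^sub>R u))^2 = (a k)^2 * (norm u)^2" using a_pos[of k] by (simp add: power_mult_distrib)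
  also have "(norm u)^2 \<le> 2 * (norm (H (x k \<omega>) - x k \<omega>))^2 + 2 * (norm (w k \<omega>))^2"
  proof -
    have "norm u \<le> norm (H (x k \<omega>) - x k \<omega>) + norm (w k \<omega>)" unfolding u_def by (rule norm_triangle_ineq)
    hence "(norm u)^2 \<le> (norm (H (x k \<omega>) - x k \<omega>) + norm (w k \<omega>))^2" by (intro power_mono) auto
    also have "\<dots> \<le> 2 * (norm (H (x k \<omega>) - x k \<omega>))^2 + 2 * (norm (w k \<omega>))^2" by (rule sq_sum_le)
    finally show ?thesis .
  qed
  also have "(norm (H (x k \<omega>) - x k \<omega>))^2 \<le> (1 + C)^2 * (norm e)^2"
    using H_bound[of "x k \<omega>"] unfolding e_def by (metis norm_ge_zero power_mono power_mult_distrib)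
  also have "(norm e)^2 \<le> \<Phi> e / c1" using equiv(1)[of "x k \<omega>"] consts_pos unfolding e_def by (simp add: field_simps)
  finally have "V (Suc k) \<omega> \<le> \<Phi> e + (a k * (- \<eta> * \<Phi> e) + a k * (g k \<omega> \<bullet> w k \<omega>))
      + L2 / 2 * ((a k)^2 * (2 * ((1 + C)^2 * (\<Phi> e / c1)) + 2 * (norm (w k \<omega>))^2))"
    using consts_pos by (simp add: mult_left_mono)
  also have "\<dots> = \<beta> k * V k \<omega> + a k * (g k \<omega> \<bullet> w k \<omega>) + L2 * (a k)^2 * (norm (w k \<omega>))^2"
    unfolding \<beta>_def D_def V_def e_def using consts_pos by (simp add: field_simps)
  finally show ?thesis .
qed

end


context sa begin

interpretation P: prob_space M by (rule prob)

definition pdom :: "nat \<Rightarrow> ('a \<Rightarrow> real) \<Rightarrow> bool" where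
  "pdom k f \<longleftrightarrow> (\<exists>c r. \<forall>\<omega>\<in>space M. \<bar>f \<omega>\<bar> \<le> c * Pk k \<omega> ^ r)"

lemma Pk_ge1: "Pk k \<omega> \<ge> 1" unfolding Pk_def by simp

lemma pdomI: "(\<And>\<omega>. \<omega> \<in> space M \<Longrightarrow> \<bar>f \<omega>\<bar> \<le> c * Pk k \<omega> ^ r) \<Longrightarrow> pdom k f"
  unfolding pdom_def by blast

lemma pdom_le: assumes "pdom k q" "\<And>\<omega>. \<omega> \<in> space M \<Longrightarrow> \<bar>f \<omega>\<bar> \<le> \<bar>q \<omega>\<bar>" shows "pdom k f"
  using assms unfolding pdom_def by (meson order_trans)

lemma pdom_const: "pdom k (\<lambda>_. c)"
  by (rule pdomI[where c="\<bar>c\<bar>" and r=0]) simp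

lemma pdom_e: "pdom k (\<lambda>\<omega>. norm (x k \<omega> - xs))"
  by (rule pdomI[where c=1 and r=1]) (simp add: Pk_def)

lemma pdom_w: "pdom k (\<lambda>\<omega>. norm (w k \<omega>))"
  by (rule pdomI[where c=1 and r=1]) (simp add: Pk_def)

lemma pdom_mult: assumes "pdom k f" "pdom k h" shows "pdom k (\<lambda>\<omega>. f \<omega> * h \<omega>)"
proof -
  obtain c1 r1 where 1: "\<forall>\<omega>\<in>space M. \<bar>f \<omega>\<bar> \<le> c1 * Pk k \<omega> ^ r1" using assms(1) unfolding pdom_def by blast
  obtain c2 r2 where 2: "\<forall>\<omega>\<in>space M. \<bar>h \<omega>\<bar> \<le> c2 * Pk k \<omega> ^ r2" using assms(2) unfolding pdom_def by blast
  show ?thesis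
  proof (rule pdomI[where c="c1 * c2" and r="r1 + r2"])
    fix \<omega> assume \<omega>: "\<omega> \<in> space M"
    have "\<bar>f \<omega> * h \<omega>\<bar> = \<bar>f \<omega>\<bar> * \<bar>h \<omega>\<bar>" by (simp add: abs_mult)
    also have "\<dots> \<le> (c1 * Pk k \<omega> ^ r1) * (c2 * Pk k \<omega> ^ r2)"
    proof (rule mult_mono)
      show "\<bar>f \<omega>\<bar> \<le> c1 * Pk k \<omega> ^ r1" "\<bar>h \<omega>\<bar> \<le> c2 * Pk k \<omega> ^ r2" using 1 2 \<omega> by auto
      show "0 \<le> c1 * Pk k \<omega> ^ r1" using 1 \<omega> abs_ge_zero[of "f \<omega>"] by fastforce
      show "0 \<le> \<bar>h \<omega>\<bar>" by simp
    qed
    also have "\<dots> = c1 * c2 * Pk k \<omega> ^ (r1 + r2)" by (simp add: power_add)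
    finally show "\<bar>f \<omega> * h \<omega>\<bar> \<le> c1 * c2 * Pk k \<omega> ^ (r1 + r2)" .
  qed
qed

lemma pdom_add: assumes "pdom k f" "pdom k h" shows "pdom k (\<lambda>\<omega>. f \<omega> + h \<omega>)"
proof -
  obtain c1 r1 where 1: "\<forall>\<omega>\<in>space M. \<bar>f \<omega>\<bar> \<le> c1 * Pk k \<omega> ^ r1" using assms(1) unfolding pdom_def by blast
  obtain c2 r2 where 2: "\<forall>\<omega>\<in>space M. \<bar>h \<omega>\<bar> \<le> c2 * Pk k \<omega> ^ r2" using assms(2) unfolding pdom_def by blast
  show ?thesis
  proof (rule pdomI[where c="\<bar>c1\<bar> + \<bar>c2\<bar>" and r="r1 + r2"])
    fix \<omega> assume \<omega>: "\<omega> \<in> space M"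
    have P1: "Pk k \<omega> \<ge> 1" by (rule Pk_ge1)
    have a: "Pk k \<omega> ^ r1 \<le> Pk k \<omega> ^ (r1 + r2)" "Pk k \<omega> ^ r2 \<le> Pk k \<omega> ^ (r1 + r2)"
      using P1 by (intro power_increasing; simp)+
    have "c1 * Pk k \<omega> ^ r1 \<le> \<bar>c1\<bar> * Pk k \<omega> ^ (r1 + r2)"
    proof -
      have "c1 * Pk k \<omega> ^ r1 \<le> \<bar>c1\<bar> * Pk k \<omega> ^ r1" using P1 by (intro mult_right_mono) auto
      also have "\<dots> \<le> \<bar>c1\<bar> * Pk k \<omega> ^ (r1 + r2)" using a(1) by (intro mult_left_mono) auto
      finally show ?thesis .
    qed
    moreover have "c2 * Pk k \<omega> ^ r2 \<le> \<bar>c2\<bar> * Pk k \<omega> ^ (r1 + r2)"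
    proof -
      have "c2 * Pk k \<omega> ^ r2 \<le> \<bar>c2\<bar> * Pk k \<omega> ^ r2" using P1 by (intro mult_right_mono) auto
      also have "\<dots> \<le> \<bar>c2\<bar> * Pk k \<omega> ^ (r1 + r2)" using a(2) by (intro mult_left_mono) auto
      finally show ?thesis .
    qed
    moreover have "\<bar>f \<omega> + h \<omega>\<bar> \<le> \<bar>f \<omega>\<bar> + \<bar>h \<omega>\<bar>" by (rule abs_triangle_ineq)
    moreover have "\<bar>f \<omega>\<bar> \<le> c1 * Pk k \<omega> ^ r1" "\<bar>h \<omega>\<bar> \<le> c2 * Pk k \<omega> ^ r2" using 1 2 \<omega> by auto
    moreover have "(\<bar>c1\<bar> + \<bar>c2\<bar>) * Pk k \<omega> ^ (r1 + r2) = \<bar>c1\<bar> * Pk k \<omega> ^ (r1 + r2) + \<bar>c2\<bar> * Pk k \<omega> ^ (r1 + r2)"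
      by (rule distrib_right)
    ultimately show "\<bar>f \<omega> + h \<omega>\<bar> \<le> (\<bar>c1\<bar> + \<bar>c2\<bar>) * Pk k \<omega> ^ (r1 + r2)" by linarith
  qed
qed

lemma pdom_pow: assumes "pdom k f" shows "pdom k (\<lambda>\<omega>. f \<omega> ^ j)"
proof (induction j)
  case 0 show ?case using pdom_const[of k 1] by simp
next
  case (Suc j) show ?case using pdom_mult[OF assms Suc] by simp
qed

lemma pdom_abs: assumes "pdom k f" shows "pdom k (\<lambda>\<omega>. \<bar>f \<omega>\<bar>)"
  using assms by (rule pdom_le) simp

lemma pdom_V: "pdom k (V k)"
proof (rule pdom_le)
  show "pdom k (\<lambda>\<omega>. c2 * (norm (x k \<omega> - xs) * norm (x k \<omega> - xs)))"
    by (intro pdom_mult pdom_const pdom_e)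
  fix \<omega> show "\<bar>V k \<omega>\<bar> \<le> \<bar>c2 * (norm (x k \<omega> - xs) * norm (x k \<omega> - xs))\<bar>"
    using V_upper[of k \<omega>] V_nonneg[of k \<omega>] consts_pos by (simp add: power2_eq_square)
qed

lemma pdom_g: "pdom k (\<lambda>\<omega>. norm (g k \<omega>))"
proof (rule pdom_le)
  show "pdom k (\<lambda>\<omega>. sqrt (2 * L2 * c2) * norm (x k \<omega> - xs))"
    by (intro pdom_mult pdom_const pdom_e)
  fix \<omega> show "\<bar>norm (g k \<omega>)\<bar> \<le> \<bar>sqrt (2 * L2 * c2) * norm (x k \<omega> - xs)\<bar>"
    using g_bound[of k \<omega>] by simp
qed

lemma pdom_V_next: "pdom k (V (Suc k))"
proof (rule pdom_le)
  define ca where "ca = 1 + a k * (1 + C)"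
  show "pdom k (\<lambda>\<omega>. c2 * ((ca * norm (x k \<omega> - xs) + a k * norm (w k \<omega>)) * (ca * norm (x k \<omega> - xs) + a k * norm (w k \<omega>))))"
    by (intro pdom_mult pdom_const pdom_e pdom_w pdom_add)
  fix \<omega> assume \<omega>: "\<omega> \<in> space M"
  have ca0: "ca \<ge> 0" unfolding ca_def using a_pos[of k] C_pos by simp
  have "norm (x (Suc k) \<omega> - xs) \<le> ca * norm (x k \<omega> - xs) + a k * norm (w k \<omega>)"
    using e_step[OF \<omega>] unfolding ca_def by simp
  hence "(norm (x (Suc k) \<omega> - xs))^2 \<le> (ca * norm (x k \<omega> - xs) + a k * norm (w k \<omega>))^2"
    by (intro power_mono) auto
  hence "V (Suc k) \<omega> \<le> c2 * (ca * norm (x k \<omega> - xs) + a k * norm (w k \<omega>))^2"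
    using V_upper[of "Suc k" \<omega>] consts_pos by (smt (verit) mult_left_mono)
  thus "\<bar>V (Suc k) \<omega>\<bar> \<le> \<bar>c2 * ((ca * norm (x k \<omega> - xs) + a k * norm (w k \<omega>)) * (ca * norm (x k \<omega> - xs) + a k * norm (w k \<omega>)))\<bar>"
    using V_nonneg[of "Suc k" \<omega>] by (simp add: power2_eq_square)
qed

lemma int_P: "integrable M (\<lambda>\<omega>. indicator (E R) \<omega> * Pk k \<omega> ^ r)"
proof (rule Bochner_Integration.integrable_bound)
  show "integrable M (\<lambda>\<omega>. 4^r * (indicator (E R) \<omega> + indicator (E R) \<omega> * norm (x k \<omega> - xs)^r + indicator (E R) \<omega> * norm (w k \<omega>)^r))"
    using I_int fin_moments by (intro integrable_mult_right Bochner_Integration.integrable_add) auto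
  show "(\<lambda>\<omega>. indicator (E R) \<omega> * Pk k \<omega> ^ r) \<in> borel_measurable M" unfolding Pk_def by measurable
  have "Pk k \<omega> ^ r \<le> 4^r * (1 + norm (x k \<omega> - xs)^r + norm (w k \<omega>)^r)" for \<omega>
  proof -
    have "Pk k \<omega> ^ r \<le> 2^r * ((1 + norm (x k \<omega> - xs))^r + norm (w k \<omega>)^r)"
      unfolding Pk_def by (intro pow_sum_le) auto
    also have "(1 + norm (x k \<omega> - xs))^r \<le> 2^r * (1^r + norm (x k \<omega> - xs)^r)" by (intro pow_sum_le) auto
    finally have "Pk k \<omega> ^ r \<le> 2^r * (2^r * (1 + norm (x k \<omega> - xs)^r) + norm (w k \<omega>)^r)" by simp
    also have "\<dots> \<le> 2^r * (2^r * (1 + norm (x k \<omega> - xs)^r) + 2^r * norm (w k \<omega>)^r)"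
    proof -
      have "1 * norm (w k \<omega>)^r \<le> 2^r * norm (w k \<omega>)^r" by (intro mult_right_mono) (auto simp: one_le_power)
      thus ?thesis by (intro mult_left_mono add_left_mono) auto
    qed
    also have "\<dots> = 4^r * (1 + norm (x k \<omega> - xs)^r + norm (w k \<omega>)^r)"
    proof -
      have four: "(4::real)^r = 2^r * 2^r" by (simp add: power_mult_distrib[symmetric])
      show ?thesis unfolding four by (simp add: algebra_simps)
    qed
    finally show ?thesis .
  qed
  thus "AE \<omega> in M. norm (indicator (E R) \<omega> * Pk k \<omega> ^ r) \<le> norm (4^r * (indicator (E R) \<omega> + indicator (E R) \<omega> * norm (x k \<omega> - xs)^r + indicator (E R) \<omega> * norm (w k \<omega>)^r))"
    by (auto simp: indicator_def Pk_def)
qed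

lemma int_dom: assumes fm: "f \<in> borel_measurable M" and d: "pdom k f"
  shows "integrable M (\<lambda>\<omega>. indicator (E R) \<omega> * f \<omega>)"
proof -
  obtain c r where cr: "\<forall>\<omega>\<in>space M. \<bar>f \<omega>\<bar> \<le> c * Pk k \<omega> ^ r" using d unfolding pdom_def by blast
  show ?thesis
  proof (rule Bochner_Integration.integrable_bound)
    show "integrable M (\<lambda>\<omega>. c * (indicator (E R) \<omega> * Pk k \<omega> ^ r))"
      using int_P by (rule integrable_mult_right)
    show "(\<lambda>\<omega>. indicator (E R) \<omega> * f \<omega>) \<in> borel_measurable M" using fm by measurable
    show "AE \<omega> in M. norm (indicator (E R) \<omega> * f \<omega>) \<le> norm (c * (indicator (E R) \<omega> * Pk k \<omega> ^ r))"
    proof (rule AE_I2)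
      fix \<omega> assume \<omega>: "\<omega> \<in> space M"
      have "\<bar>f \<omega>\<bar> \<le> c * Pk k \<omega> ^ r" using cr \<omega> by auto
      thus "norm (indicator (E R) \<omega> * f \<omega>) \<le> norm (c * (indicator (E R) \<omega> * Pk k \<omega> ^ r))"
        by (auto simp: indicator_def)
    qed
  qed
qed

end


context sa begin

interpretation P: prob_space M by (rule prob)

lemma pw_main:
  assumes \<omega>: "\<omega> \<in> space M" and nm: "n = 2*m" "m \<ge> 1" and \<beta>: "0 \<le> \<beta> k" "\<beta> k \<le> 1"
  shows "V (Suc k) \<omega> ^ n \<le> \<beta> k ^ n * V k \<omega> ^ n + (real n * \<beta> k ^ (n-1) * V k \<omega> ^ (n-1) * a k) * (g k \<omega> \<bullet> w k \<omega>)
     + (real n * L2 + 2^n * 4 * L2) * a k^2 * (V k \<omega> ^ (n-1) * norm (w k \<omega>)^(2*1))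
     + (2^n * 2 * L2^2) * a k^4 * (V k \<omega> ^ (n-2) * norm (w k \<omega>)^(2*2))
     + (4^n * (2 * L2)^m) * a k^n * (V k \<omega> ^ m * norm (w k \<omega>)^(2*m))
     + (4^n * L2^n) * a k^(2*n) * (norm (w k \<omega>)^(2*n))"
proof -
  have PP: "V (Suc k) \<omega> ^ n \<le> \<beta> k ^ n * V k \<omega> ^ n + real n * \<beta> k ^ (n-1) * V k \<omega> ^ (n-1) * a k * (g k \<omega> \<bullet> w k \<omega>)
     + (real n * L2 + 2^n * 4 * L2) * a k^2 * V k \<omega> ^ (n-1) * (norm (w k \<omega>))^2
     + (2^n * 2 * L2^2) * a k^4 * V k \<omega> ^ (n-2) * ((norm (w k \<omega>))^2)^2
     + (4^n * (2 * L2)^m) * a k^n * V k \<omega> ^ m * ((norm (w k \<omega>))^2)^m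
     + (4^n * L2^n) * a k^(2*n) * ((norm (w k \<omega>))^2)^n"
    using consts_pos a_pos[of k] by (intro pointwise_pow[OF V_nonneg V_nonneg _ _ \<beta> _ nm s_sq V_step[OF \<omega>]]) auto
  have p: "((norm (w k \<omega>))^2)^j = norm (w k \<omega>)^(2*j)" for j by (simp add: power_mult)
  show ?thesis using PP unfolding p by (simp add: algebra_simps power2_eq_square)
qed

lemma main_step:
  fixes n m :: nat and R :: real
  assumes nm: "n = 2*m" "m \<ge> 1" and \<beta>: "0 \<le> \<beta> k" "\<beta> k \<le> 1"
  shows "(\<integral>\<omega>. indicator (E R) \<omega> * V (Suc k) \<omega> ^ n \<partial>M) \<le> (\<integral>\<omega>. indicator (E R) \<omega> * (\<beta> k ^ n * V k \<omega> ^ n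
      + (real n * L2 + 2^n * 4 * L2) * a k^2 * (V k \<omega> ^ (n-1) * (Aw 1 + Bw 1 * norm (x k \<omega> - xs)^(2*1)))
      + (2^n * 2 * L2^2) * a k^4 * (V k \<omega> ^ (n-2) * (Aw 2 + Bw 2 * norm (x k \<omega> - xs)^(2*2)))
      + (4^n * (2 * L2)^m) * a k^n * (V k \<omega> ^ m * (Aw m + Bw m * norm (x k \<omega> - xs)^(2*m)))
      + (4^n * L2^n) * a k^(2*n) * (Aw n + Bw n * norm (x k \<omega> - xs)^(2*n))) \<partial>M)"
    (is "?L \<le> ?R")
proof -
  define I where "I = (\<lambda>\<omega>. indicator (E R) \<omega> :: real)"
  define q1 where "q1 = (real n * L2 + 2^n * 4 * L2) * a k^2"
  define q2 where "q2 = (2^n * 2 * L2^2) * a k^4"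
  define q3 where "q3 = (4^n * (2 * L2)^m) * a k^n"
  define q4 where "q4 = (4^n * L2^n) * a k^(2*n)"
  have n1: "n \<ge> 1" "n \<ge> 2" using nm by auto
  have [measurable]: "I \<in> borel_measurable M" unfolding I_def by measurable
  have IF[measurable]: "I \<in> borel_measurable (F k)" unfolding I_def by (rule I_meas_F)
  have [measurable]: "V k \<in> borel_measurable (F k)" "g k \<in> borel_measurable (F k)" by (rule V_meas_F, rule g_meas_F)
  have I0: "\<And>\<omega>. I \<omega> \<ge> 0" unfolding I_def by simp
  define h1 where "h1 = (\<lambda>\<omega>. I \<omega> * V k \<omega> ^ (n-1))"
  define h2 where "h2 = (\<lambda>\<omega>. I \<omega> * V k \<omega> ^ (n-2))"
  define h3 where "h3 = (\<lambda>\<omega>. I \<omega> * V k \<omega> ^ m)"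
  define h4 where "h4 = I"
  have hF: "h1 \<in> borel_measurable (F k)" "h2 \<in> borel_measurable (F k)" "h3 \<in> borel_measurable (F k)" "h4 \<in> borel_measurable (F k)"
    unfolding h1_def h2_def h3_def h4_def by measurable
  have h0: "\<And>\<omega>. h1 \<omega> \<ge> 0" "\<And>\<omega>. h2 \<omega> \<ge> 0" "\<And>\<omega>. h3 \<omega> \<ge> 0" "\<And>\<omega>. h4 \<omega> \<ge> 0"
    unfolding h1_def h2_def h3_def h4_def using I0 V_nonneg by auto
  have j1: "(1::nat) \<ge> 1" "(2::nat) \<ge> 1" "m \<ge> 1" "n \<ge> 1" using n1 nm by auto
  define r1 where "r1 = (\<lambda>\<omega>. h1 \<omega> * (Aw 1 + Bw 1 * norm (x k \<omega> - xs)^(2*1)))"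
  define r2 where "r2 = (\<lambda>\<omega>. h2 \<omega> * (Aw 2 + Bw 2 * norm (x k \<omega> - xs)^(2*2)))"
  define r3 where "r3 = (\<lambda>\<omega>. h3 \<omega> * (Aw m + Bw m * norm (x k \<omega> - xs)^(2*m)))"
  define r4 where "r4 = (\<lambda>\<omega>. h4 \<omega> * (Aw n + Bw n * norm (x k \<omega> - xs)^(2*n)))"
  have ri: "integrable M r1" "integrable M r2" "integrable M r3" "integrable M r4"
  proof -
    have "integrable M (\<lambda>\<omega>. indicator (E R) \<omega> * (V k \<omega> ^ (n-1) * (Aw 1 + Bw 1 * norm (x k \<omega> - xs)^(2*1))))"
      by (intro int_dom[where k=k] pdom_mult pdom_pow pdom_add pdom_const pdom_V pdom_e) measurable
    thus "integrable M r1" unfolding r1_def h1_def I_def by (simp add: mult.assoc)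
    have "integrable M (\<lambda>\<omega>. indicator (E R) \<omega> * (V k \<omega> ^ (n-2) * (Aw 2 + Bw 2 * norm (x k \<omega> - xs)^(2*2))))"
      by (intro int_dom[where k=k] pdom_mult pdom_pow pdom_add pdom_const pdom_V pdom_e) measurable
    thus "integrable M r2" unfolding r2_def h2_def I_def by (simp add: mult.assoc)
    have "integrable M (\<lambda>\<omega>. indicator (E R) \<omega> * (V k \<omega> ^ m * (Aw m + Bw m * norm (x k \<omega> - xs)^(2*m))))"
      by (intro int_dom[where k=k] pdom_mult pdom_pow pdom_add pdom_const pdom_V pdom_e) measurable
    thus "integrable M r3" unfolding r3_def h3_def I_def by (simp add: mult.assoc)
    have "integrable M (\<lambda>\<omega>. indicator (E R) \<omega> * (Aw n + Bw n * norm (x k \<omega> - xs)^(2*n)))"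
      by (intro int_dom[where k=k] pdom_mult pdom_pow pdom_add pdom_const pdom_V pdom_e) measurable
    thus "integrable M r4" unfolding r4_def h4_def I_def by simp
  qed
  define f1 where "f1 = (\<lambda>\<omega>. h1 \<omega> * norm (w k \<omega>)^(2*1))"
  define f2 where "f2 = (\<lambda>\<omega>. h2 \<omega> * norm (w k \<omega>)^(2*2))"
  define f3 where "f3 = (\<lambda>\<omega>. h3 \<omega> * norm (w k \<omega>)^(2*m))"
  define f4 where "f4 = (\<lambda>\<omega>. h4 \<omega> * norm (w k \<omega>)^(2*n))"
  have fi: "integrable M f1" "integrable M f2" "integrable M f3" "integrable M f4"
    unfolding f1_def f2_def f3_def f4_def
    using moment_int(1)[OF hF(1) h0(1) j1(1) ri(1)[unfolded r1_def]]
      moment_int(1)[OF hF(2) h0(2) j1(2) ri(2)[unfolded r2_def]]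
      moment_int(1)[OF hF(3) h0(3) j1(3) ri(3)[unfolded r3_def]]
      moment_int(1)[OF hF(4) h0(4) j1(4) ri(4)[unfolded r4_def]] by auto
  have fr: "integral\<^sup>L M f1 \<le> integral\<^sup>L M r1" "integral\<^sup>L M f2 \<le> integral\<^sup>L M r2"
           "integral\<^sup>L M f3 \<le> integral\<^sup>L M r3" "integral\<^sup>L M f4 \<le> integral\<^sup>L M r4"
    unfolding f1_def f2_def f3_def f4_def r1_def r2_def r3_def r4_def
    using moment_int(2)[OF hF(1) h0(1) j1(1) ri(1)[unfolded r1_def]]
      moment_int(2)[OF hF(2) h0(2) j1(2) ri(2)[unfolded r2_def]]
      moment_int(2)[OF hF(3) h0(3) j1(3) ri(3)[unfolded r3_def]]
      moment_int(2)[OF hF(4) h0(4) j1(4) ri(4)[unfolded r4_def]] by auto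
  define cz where "cz = (\<lambda>\<omega>. I \<omega> * (real n * \<beta> k ^ (n-1) * V k \<omega> ^ (n-1) * a k))"
  define fv where "fv = (\<lambda>\<omega>. cz \<omega> *\<^sub>R g k \<omega>)"
  have fvF: "fv \<in> borel_measurable (F k)" unfolding fv_def cz_def by measurable
  have fvi: "integrable M (\<lambda>\<omega>. norm (fv \<omega>) * norm (w k \<omega>))"
  proof -
    have "integrable M (\<lambda>\<omega>. indicator (E R) \<omega> * (\<bar>real n * \<beta> k ^ (n-1) * V k \<omega> ^ (n-1) * a k\<bar> * (norm (g k \<omega>) * norm (w k \<omega>))))"
      by (intro int_dom[where k=k] pdom_mult pdom_pow pdom_add pdom_const pdom_V pdom_e pdom_abs pdom_g pdom_w) measurable
    moreover have "(\<lambda>\<omega>. indicator (E R) \<omega> * (\<bar>real n * \<beta> k ^ (n-1) * V k \<omega> ^ (n-1) * a k\<bar> * (norm (g k \<omega>) * norm (w k \<omega>))))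
       = (\<lambda>\<omega>. norm (fv \<omega>) * norm (w k \<omega>))"
      by (rule ext) (auto simp: fv_def cz_def I_def indicator_def abs_mult)
    ultimately show ?thesis by (simp only:)
  qed
  have zm: "(\<integral>\<omega>. fv \<omega> \<bullet> w k \<omega> \<partial>M) = 0" by (rule zero_mean[OF fvF fvi])
  have fvw: "fv \<omega> \<bullet> w k \<omega> = cz \<omega> * (g k \<omega> \<bullet> w k \<omega>)" for \<omega> unfolding fv_def by simp
  have czi: "integrable M (\<lambda>\<omega>. cz \<omega> * (g k \<omega> \<bullet> w k \<omega>))"
  proof -
    have "integrable M (\<lambda>\<omega>. fv \<omega> \<bullet> w k \<omega>)"
    proof (rule Bochner_Integration.integrable_bound[OF fvi])
      have [measurable]: "fv \<in> borel_measurable M" by (rule measurable_from_subalg[OF subalg fvF])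
      show "(\<lambda>\<omega>. fv \<omega> \<bullet> w k \<omega>) \<in> borel_measurable M" by measurable
      show "AE \<omega> in M. norm (fv \<omega> \<bullet> w k \<omega>) \<le> norm (norm (fv \<omega>) * norm (w k \<omega>))"
        by (auto intro: Cauchy_Schwarz_ineq2)
    qed
    thus ?thesis unfolding fvw .
  qed
  define f0 where "f0 = (\<lambda>\<omega>. I \<omega> * (\<beta> k ^ n * V k \<omega> ^ n))"
  have f0i: "integrable M f0" unfolding f0_def I_def
    by (intro int_dom[where k=k] pdom_mult pdom_pow pdom_const pdom_V) measurable
  have Li: "integrable M (\<lambda>\<omega>. I \<omega> * V (Suc k) \<omega> ^ n)" unfolding I_def
    by (intro int_dom[where k=k] pdom_pow pdom_V_next) measurable
  have pw: "I \<omega> * V (Suc k) \<omega> ^ n \<le> f0 \<omega> + cz \<omega> * (g k \<omega> \<bullet> w k \<omega>) + q1 * f1 \<omega> + q2 * f2 \<omega> + q3 * f3 \<omega> + q4 * f4 \<omega>"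
    if \<omega>: "\<omega> \<in> space M" for \<omega>
  proof (cases "\<omega> \<in> E R")
    case True
    thus ?thesis using pw_main[OF \<omega> nm \<beta>]
      unfolding I_def f0_def cz_def f1_def f2_def f3_def f4_def h1_def h2_def h3_def h4_def q1_def q2_def q3_def q4_def
      by (simp add: mult.assoc)
  next
    case False
    thus ?thesis unfolding I_def f0_def cz_def f1_def f2_def f3_def f4_def h1_def h2_def h3_def h4_def by simp
  qed
  have "?L = (\<integral>\<omega>. I \<omega> * V (Suc k) \<omega> ^ n \<partial>M)" unfolding I_def ..
  also have "\<dots> \<le> (\<integral>\<omega>. f0 \<omega> + cz \<omega> * (g k \<omega> \<bullet> w k \<omega>) + q1 * f1 \<omega> + q2 * f2 \<omega> + q3 * f3 \<omega> + q4 * f4 \<omega> \<partial>M)"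
    using Li f0i czi fi pw by (intro integral_mono) auto
  also have "\<dots> = integral\<^sup>L M f0 + (\<integral>\<omega>. cz \<omega> * (g k \<omega> \<bullet> w k \<omega>) \<partial>M) + q1 * integral\<^sup>L M f1 + q2 * integral\<^sup>L M f2 + q3 * integral\<^sup>L M f3 + q4 * integral\<^sup>L M f4"
    using f0i czi fi by simp
  also have "(\<integral>\<omega>. cz \<omega> * (g k \<omega> \<bullet> w k \<omega>) \<partial>M) = 0" using zm unfolding fvw .
  also have "integral\<^sup>L M f0 + 0 + q1 * integral\<^sup>L M f1 + q2 * integral\<^sup>L M f2 + q3 * integral\<^sup>L M f3 + q4 * integral\<^sup>L M f4
      \<le> integral\<^sup>L M f0 + q1 * integral\<^sup>L M r1 + q2 * integral\<^sup>L M r2 + q3 * integral\<^sup>L M r3 + q4 * integral\<^sup>L M r4"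
  proof -
    have q: "q1 \<ge> 0" "q2 \<ge> 0" "q3 \<ge> 0" "q4 \<ge> 0" unfolding q1_def q2_def q3_def q4_def using consts_pos a_pos[of k] by auto
    show ?thesis using mult_left_mono[OF fr(1) q(1)] mult_left_mono[OF fr(2) q(2)] mult_left_mono[OF fr(3) q(3)] mult_left_mono[OF fr(4) q(4)]
      by linarith
  qed
  also have "\<dots> = (\<integral>\<omega>. f0 \<omega> + q1 * r1 \<omega> + q2 * r2 \<omega> + q3 * r3 \<omega> + q4 * r4 \<omega> \<partial>M)"
    using f0i ri by simp
  also have "\<dots> = ?R"
    unfolding f0_def r1_def r2_def r3_def r4_def h1_def h2_def h3_def h4_def q1_def q2_def q3_def q4_def I_def
    by (intro Bochner_Integration.integral_cong refl) (simp add: algebra_simps)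
  finally show ?thesis .
qed

end


lemma en_bound: fixes V En c1 :: real assumes "V \<ge> 0" "c1 > 0" "c1 * En^2 \<le> V"
  shows "En^(2*j) \<le> V^j / c1^j"
proof -
  have "En^2 \<le> V / c1" using assms by (simp add: pos_le_divide_eq mult.commute)
  hence "(En^2)^j \<le> (V / c1)^j" by (intro power_mono) auto
  thus ?thesis by (simp add: power_mult power_divide)
qed

lemma tb: fixes V En c1 q A B b :: real
  assumes V: "V \<ge> 0" and c: "c1 > 0" and e: "c1 * En^2 \<le> V" and q: "q \<ge> 0" and A: "A \<ge> 0" and B: "B \<ge> 0"
    and b: "b \<ge> 0" and ij: "i + j = n"
  shows "q * b * (V^i * (A + B * En^(2*j))) \<le> (q*A) * (b * V^i) + (q*B/c1^j) * (b * V^n)"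
proof -
  have "B * En^(2*j) \<le> B * (V^j / c1^j)" using en_bound[OF V c e] B by (intro mult_left_mono) auto
  hence "V^i * (A + B * En^(2*j)) \<le> V^i * (A + B * (V^j / c1^j))" using V by (intro mult_left_mono) auto
  also have "\<dots> = A * V^i + (B / c1^j) * V^n" using ij by (simp add: algebra_simps power_add[symmetric])
  finally have "q * b * (V^i * (A + B * En^(2*j))) \<le> q * b * (A * V^i + (B / c1^j) * V^n)"
    using q b by (intro mult_left_mono) auto
  thus ?thesis by (simp add: algebra_simps)
qed

lemma rhs_le:
  fixes \<beta> a V En c1 q1 q2 q3 q4 A1 B1 A2 B2 Am Bm An Bn :: real and n m :: nat
  assumes V: "V \<ge> 0" and c: "c1 > 0" and e: "c1 * En^2 \<le> V" and a: "a \<ge> 0"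
    and q: "q1 \<ge> 0" "q2 \<ge> 0" "q3 \<ge> 0" "q4 \<ge> 0"
    and AB: "A1 \<ge> 0" "B1 \<ge> 0" "A2 \<ge> 0" "B2 \<ge> 0" "Am \<ge> 0" "Bm \<ge> 0" "An \<ge> 0" "Bn \<ge> 0"
    and nm: "n = 2*m" "m \<ge> 1"
    and Q: "Q = q1*A1 + q1*B1/c1^1 + q2*A2 + q2*B2/c1^2 + q3*Am + q3*Bm/c1^m + q4*An + q4*Bn/c1^n"
  shows "\<beta>^n * V^n + q1 * a^2 * (V^(n-1) * (A1 + B1 * En^(2*1))) + q2 * a^4 * (V^(n-2) * (A2 + B2 * En^(2*2)))
      + q3 * a^n * (V^m * (Am + Bm * En^(2*m))) + q4 * a^(2*n) * (An + Bn * En^(2*n))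
    \<le> \<beta>^n * V^n + Q * (a^2*V^(n-1) + a^2*V^n + a^4*V^(n-2) + a^4*V^n + a^n*V^m + a^n*V^n + a^(2*n) + a^(2*n)*V^n)"
proof -
  have t1: "q1 * a^2 * (V^(n-1) * (A1 + B1 * En^(2*1))) \<le> (q1*A1) * (a^2 * V^(n-1)) + (q1*B1/c1^1) * (a^2 * V^n)"
    using nm by (intro tb[OF V c e q(1) AB(1,2)]) auto
  have t2: "q2 * a^4 * (V^(n-2) * (A2 + B2 * En^(2*2))) \<le> (q2*A2) * (a^4 * V^(n-2)) + (q2*B2/c1^2) * (a^4 * V^n)"
    using nm by (intro tb[OF V c e q(2) AB(3,4)]) auto
  have t3: "q3 * a^n * (V^m * (Am + Bm * En^(2*m))) \<le> (q3*Am) * (a^n * V^m) + (q3*Bm/c1^m) * (a^n * V^n)"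
    using nm a by (intro tb[OF V c e q(3) AB(5,6)]) auto
  have t4': "q4 * a^(2*n) * (V^0 * (An + Bn * En^(2*n))) \<le> (q4*An) * (a^(2*n) * V^0) + (q4*Bn/c1^n) * (a^(2*n) * V^n)"
    using nm a by (intro tb[OF V c e q(4) AB(7,8)]) auto
  hence t4: "q4 * a^(2*n) * (An + Bn * En^(2*n)) \<le> (q4*An) * a^(2*n) + (q4*Bn/c1^n) * (a^(2*n) * V^n)" by simp
  have k: "q1*A1 \<ge> 0" "q1*B1/c1^1 \<ge> 0" "q2*A2 \<ge> 0" "q2*B2/c1^2 \<ge> 0" "q3*Am \<ge> 0" "q3*Bm/c1^m \<ge> 0" "q4*An \<ge> 0" "q4*Bn/c1^n \<ge> 0"
    using q AB c by auto
  have kQ: "q1*A1 \<le> Q" "q1*B1/c1^1 \<le> Q" "q2*A2 \<le> Q" "q2*B2/c1^2 \<le> Q" "q3*Am \<le> Q" "q3*Bm/c1^m \<le> Q" "q4*An \<le> Q" "q4*Bn/c1^n \<le> Q"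
    unfolding Q using k by linarith+
  have mo: "a^2 * V^(n-1) \<ge> 0" "a^2 * V^n \<ge> 0" "a^4 * V^(n-2) \<ge> 0" "a^4 * V^n \<ge> 0" "a^n * V^m \<ge> 0" "a^n * V^n \<ge> 0" "a^(2*n) \<ge> 0" "a^(2*n) * V^n \<ge> 0"
    using a V by auto
  have "(q1*A1) * (a^2 * V^(n-1)) + (q1*B1/c1^1) * (a^2 * V^n) + ((q2*A2) * (a^4 * V^(n-2)) + (q2*B2/c1^2) * (a^4 * V^n))
    + ((q3*Am) * (a^n * V^m) + (q3*Bm/c1^m) * (a^n * V^n)) + ((q4*An) * a^(2*n) + (q4*Bn/c1^n) * (a^(2*n) * V^n))
    \<le> Q * (a^2 * V^(n-1)) + Q * (a^2 * V^n) + (Q * (a^4 * V^(n-2)) + Q * (a^4 * V^n))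
    + (Q * (a^n * V^m) + Q * (a^n * V^n)) + (Q * a^(2*n) + Q * (a^(2*n) * V^n))"
    by (intro add_mono mult_right_mono kQ mo)
  also have "\<dots> = Q * (a^2*V^(n-1) + a^2*V^n + a^4*V^(n-2) + a^4*V^n + a^n*V^m + a^n*V^n + a^(2*n) + a^(2*n)*V^n)"
    by (simp add: algebra_simps)
  finally show ?thesis using t1 t2 t3 t4 by linarith
qed


context sa begin

interpretation P: prob_space M by (rule prob)

lemma a_tendsto: "a \<longlonglongrightarrow> 0"
proof -
  have "filterlim (\<lambda>k. K + real k) at_top sequentially"
    by (rule filterlim_tendsto_add_at_top[OF tendsto_const filterlim_real_sequentially])
  hence "filterlim (\<lambda>k. real k + K) at_top sequentially" by (simp add: add.commute)
  hence "(\<lambda>k. (real k + K) powr (-\<xi>)) \<longlonglongrightarrow> 0" using xi by (intro tendsto_neg_powr) auto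
  hence "(\<lambda>k. \<alpha>0 * (real k + K) powr (-\<xi>)) \<longlonglongrightarrow> \<alpha>0 * 0" by (intro tendsto_mult tendsto_const)
  thus ?thesis unfolding a_def[abs_def] by simp
qed

lemma conv_on_E: "AE \<omega> in M. \<omega> \<in> E R \<longrightarrow> (\<lambda>k. x k \<omega>) \<longlonglongrightarrow> xs"
proof -
  have eta: "\<eta> > 0" and c1p: "c1 > 0" and L: "L2 > 0" using consts_pos by auto
  define m where "m = nat \<lceil>1/\<xi> + 4/(\<eta> * \<alpha>0)\<rceil> + 1"
  have mr: "real m \<ge> 1/\<xi> + 4/(\<eta> * \<alpha>0)" unfolding m_def by linarith
  have m1: "m \<ge> 1" unfolding m_def by simp
  have mxi: "real m * \<xi> \<ge> 1"
  proof -
    have "real m \<ge> 1/\<xi>" using mr eta alpha_pos by (smt (verit) divide_nonneg_nonneg mult_nonneg_nonneg)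
    thus ?thesis using xi by (simp add: field_simps)
  qed
  have meta: "real m * \<eta> * \<alpha>0 \<ge> 4"
  proof -
    have "real m \<ge> 4/(\<eta> * \<alpha>0)" using mr xi by (smt (verit) divide_nonneg_nonneg)
    thus ?thesis using eta alpha_pos by (simp add: field_simps)
  qed
  define n where "n = 2 * m"
  have nm: "n = 2*m" "m \<ge> 1" using m1 unfolding n_def by auto
  have n2: "n \<ge> 2" "m < n" using nm by auto
  define q1 where "q1 = real n * L2 + 2^n * 4 * L2"
  define q2 where "q2 = (2::real)^n * 2 * L2^2"
  define q3 where "q3 = (4::real)^n * (2 * L2)^m"
  define q4 where "q4 = (4::real)^n * L2^n"
  have q: "q1 \<ge> 0" "q2 \<ge> 0" "q3 \<ge> 0" "q4 \<ge> 0" unfolding q1_def q2_def q3_def q4_def using L by auto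
  have AB: "Aw 1 \<ge> 0" "Bw 1 \<ge> 0" "Aw 2 \<ge> 0" "Bw 2 \<ge> 0" "Aw m \<ge> 0" "Bw m \<ge> 0" "Aw n \<ge> 0" "Bw n \<ge> 0"
    using ABw(1,2)[of 1] ABw(1,2)[of 2] ABw(1,2)[of m] ABw(1,2)[of n] nm by auto
  define Q where "Q = q1*Aw 1 + q1*Bw 1/c1^1 + q2*Aw 2 + q2*Bw 2/c1^2 + q3*Aw m + q3*Bw m/c1^m + q4*Aw n + q4*Bw n/c1^n"
  have Q0: "Q \<ge> 0" unfolding Q_def using q AB c1p by auto
  have D0: "D \<ge> 0" unfolding D_def using L c1p by simp
  obtain a1 Kc where a1: "a1 > 0" "a1 \<le> 1" and Kc: "Kc \<ge> 0" and pb: "\<And>a V. 0 < a \<Longrightarrow> a \<le> a1 \<Longrightarrow> V \<ge> 0 \<Longrightarrow>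
     0 \<le> 1 - \<eta>*a + D*a^2 \<and> 1 - \<eta>*a + D*a^2 \<le> 1 \<and>
     (1 - \<eta>*a + D*a^2)^n * V^n + Q * (a^2*V^(n-1) + a^2*V^n + a^4*V^(n-2) + a^4*V^n + a^n*V^m + a^n*V^n + a^(2*n) + a^(2*n)*V^n)
       \<le> (1 - (real n * \<eta> / 2) * a) * V^n + Kc * a^(Suc n)"
    using poly_bound[OF eta D0 Q0 n2(1) nm(2) n2(2)] by blast
  define c where "c = real n * \<eta> / 2"
  have cpos: "c > 0" unfolding c_def using eta nm by simp
  have ev1: "eventually (\<lambda>k. a k < min a1 (1/c)) sequentially"
    using order_tendstoD(2)[OF a_tendsto, of "min a1 (1/c)"] a1 cpos by auto
  have ev: "eventually (\<lambda>k. a k < min a1 (1/c) \<and> k \<ge> 1) sequentially"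
    using eventually_conj[OF ev1 eventually_ge_at_top[of "1::nat"]] by simp
  then obtain k0 where k0: "\<And>k. k \<ge> k0 \<Longrightarrow> a k < min a1 (1/c) \<and> k \<ge> 1"
    unfolding eventually_sequentially by blast
  define u where "u k = (\<integral>\<omega>. indicator (E R) \<omega> * V k \<omega> ^ n \<partial>M)" for k
  have u0: "u k \<ge> 0" for k unfolding u_def using V_nonneg by (intro integral_nonneg_AE) auto
  have ui: "integrable M (\<lambda>\<omega>. indicator (E R) \<omega> * V k \<omega> ^ n)" for k
    by (intro int_dom[where k=k] pdom_pow pdom_V) measurable
  have rec: "u (Suc k) \<le> (1 - c * a k) * u k + Kc * a k ^ Suc n" if k: "k \<ge> k0" for k
  proof -
    have ak: "0 < a k" "a k \<le> a1" using k0[OF k] a_pos[of k] by auto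
    have bet: "0 \<le> \<beta> k" "\<beta> k \<le> 1" using pb[OF ak V_nonneg[of k undefined]] unfolding \<beta>_def by auto
    have "u (Suc k) \<le> (\<integral>\<omega>. indicator (E R) \<omega> * (\<beta> k ^ n * V k \<omega> ^ n
      + (real n * L2 + 2^n * 4 * L2) * a k^2 * (V k \<omega> ^ (n-1) * (Aw 1 + Bw 1 * norm (x k \<omega> - xs)^(2*1)))
      + (2^n * 2 * L2^2) * a k^4 * (V k \<omega> ^ (n-2) * (Aw 2 + Bw 2 * norm (x k \<omega> - xs)^(2*2)))
      + (4^n * (2 * L2)^m) * a k^n * (V k \<omega> ^ m * (Aw m + Bw m * norm (x k \<omega> - xs)^(2*m)))
      + (4^n * L2^n) * a k^(2*n) * (Aw n + Bw n * norm (x k \<omega> - xs)^(2*n))) \<partial>M)"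
      unfolding u_def by (rule main_step[OF nm bet])
    also have "\<dots> \<le> (\<integral>\<omega>. indicator (E R) \<omega> * ((1 - c * a k) * V k \<omega> ^ n + Kc * a k ^ Suc n) \<partial>M)"
    proof (rule integral_mono)
      show "integrable M (\<lambda>\<omega>. indicator (E R) \<omega> * (\<beta> k ^ n * V k \<omega> ^ n
      + (real n * L2 + 2^n * 4 * L2) * a k^2 * (V k \<omega> ^ (n-1) * (Aw 1 + Bw 1 * norm (x k \<omega> - xs)^(2*1)))
      + (2^n * 2 * L2^2) * a k^4 * (V k \<omega> ^ (n-2) * (Aw 2 + Bw 2 * norm (x k \<omega> - xs)^(2*2)))
      + (4^n * (2 * L2)^m) * a k^n * (V k \<omega> ^ m * (Aw m + Bw m * norm (x k \<omega> - xs)^(2*m)))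
      + (4^n * L2^n) * a k^(2*n) * (Aw n + Bw n * norm (x k \<omega> - xs)^(2*n))))"
        by (intro int_dom[where k=k] pdom_mult pdom_pow pdom_add pdom_const pdom_V pdom_e) measurable
      show "integrable M (\<lambda>\<omega>. indicator (E R) \<omega> * ((1 - c * a k) * V k \<omega> ^ n + Kc * a k ^ Suc n))"
        by (intro int_dom[where k=k] pdom_mult pdom_pow pdom_add pdom_const pdom_V pdom_e) measurable
      fix \<omega> assume \<omega>: "\<omega> \<in> space M"
      have "\<beta> k ^ n * V k \<omega> ^ n
      + q1 * a k^2 * (V k \<omega> ^ (n-1) * (Aw 1 + Bw 1 * norm (x k \<omega> - xs)^(2*1)))
      + q2 * a k^4 * (V k \<omega> ^ (n-2) * (Aw 2 + Bw 2 * norm (x k \<omega> - xs)^(2*2)))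
      + q3 * a k^n * (V k \<omega> ^ m * (Aw m + Bw m * norm (x k \<omega> - xs)^(2*m)))
      + q4 * a k^(2*n) * (Aw n + Bw n * norm (x k \<omega> - xs)^(2*n))
      \<le> \<beta> k ^ n * V k \<omega> ^ n + Q * ((a k)^2*(V k \<omega>)^(n-1) + (a k)^2*(V k \<omega>)^n + (a k)^4*(V k \<omega>)^(n-2) + (a k)^4*(V k \<omega>)^n
          + (a k)^n*(V k \<omega>)^m + (a k)^n*(V k \<omega>)^n + (a k)^(2*n) + (a k)^(2*n)*(V k \<omega>)^n)"
        by (rule rhs_le[OF V_nonneg c1p V_lower _ q AB nm Q_def]) (use a_pos[of k] in simp)
      also have "\<dots> \<le> (1 - c * a k) * V k \<omega> ^ n + Kc * a k ^ Suc n"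
        using pb[OF ak V_nonneg[of k \<omega>]] unfolding \<beta>_def c_def by simp
      finally have "\<beta> k ^ n * V k \<omega> ^ n
      + q1 * a k^2 * (V k \<omega> ^ (n-1) * (Aw 1 + Bw 1 * norm (x k \<omega> - xs)^(2*1)))
      + q2 * a k^4 * (V k \<omega> ^ (n-2) * (Aw 2 + Bw 2 * norm (x k \<omega> - xs)^(2*2)))
      + q3 * a k^n * (V k \<omega> ^ m * (Aw m + Bw m * norm (x k \<omega> - xs)^(2*m)))
      + q4 * a k^(2*n) * (Aw n + Bw n * norm (x k \<omega> - xs)^(2*n)) \<le> (1 - c * a k) * V k \<omega> ^ n + Kc * a k ^ Suc n" .
      thus "indicator (E R) \<omega> * (\<beta> k ^ n * V k \<omega> ^ n
      + (real n * L2 + 2^n * 4 * L2) * a k^2 * (V k \<omega> ^ (n-1) * (Aw 1 + Bw 1 * norm (x k \<omega> - xs)^(2*1)))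
      + (2^n * 2 * L2^2) * a k^4 * (V k \<omega> ^ (n-2) * (Aw 2 + Bw 2 * norm (x k \<omega> - xs)^(2*2)))
      + (4^n * (2 * L2)^m) * a k^n * (V k \<omega> ^ m * (Aw m + Bw m * norm (x k \<omega> - xs)^(2*m)))
      + (4^n * L2^n) * a k^(2*n) * (Aw n + Bw n * norm (x k \<omega> - xs)^(2*n)))
        \<le> indicator (E R) \<omega> * ((1 - c * a k) * V k \<omega> ^ n + Kc * a k ^ Suc n)"
        unfolding q1_def q2_def q3_def q4_def by (intro mult_left_mono) auto
    qed
    also have "\<dots> = (1 - c * a k) * u k + Kc * a k ^ Suc n * (\<integral>\<omega>. indicator (E R) \<omega> \<partial>M)"
      unfolding u_def using ui[of k] I_int[of R] by (simp add: algebra_simps)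
    also have "(\<integral>\<omega>. indicator (E R) \<omega> \<partial>M) = measure M (E R)" by simp
    also have "Kc * a k ^ Suc n * measure M (E R) \<le> Kc * a k ^ Suc n * 1"
      using Kc a_pos[of k] P.prob_le_1 by (intro mult_left_mono) auto
    finally show ?thesis by simp
  qed
  have summ: "summable u"
  proof (rule seq_summable[where u=u and a=a and c=c and Kc=Kc and n=n, OF u0 rec])
    show "\<And>k. a k = \<alpha>0 * (real k + K) powr (-\<xi>)" unfolding a_def ..
    show "\<alpha>0 > 0" "K > 0" "0 < \<xi>" "\<xi> \<le> 1" "c > 0" "Kc \<ge> 0" using alpha_pos K_pos xi cpos Kc by auto
    show "c * \<alpha>0 \<ge> 4" using meta unfolding c_def n_def by (simp add: algebra_simps)
    show "real n * \<xi> \<ge> 2" using mxi unfolding n_def by simp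
    show "\<And>k. k \<ge> k0 \<Longrightarrow> real k + K \<ge> 1" using k0 K_pos by (smt (verit) of_nat_1 of_nat_mono)
    show "\<And>k. k \<ge> k0 \<Longrightarrow> c * a k \<le> 1"
    proof -
      fix k assume "k \<ge> k0"
      hence "a k < 1/c" using k0 by auto
      thus "c * a k \<le> 1" using cpos by (simp add: field_simps)
    qed
  qed
  \<comment> \<open>from summability of moments to a.s. convergence\<close>
  define Z where "Z k \<omega> = indicator (E R) \<omega> * V k \<omega> ^ n" for k \<omega>
  have Zm[measurable]: "Z k \<in> borel_measurable M" for k unfolding Z_def by measurable
  have Z0: "Z k \<omega> \<ge> 0" for k \<omega> unfolding Z_def using V_nonneg by simp
  have "(\<integral>\<^sup>+\<omega>. (\<Sum>k. ennreal (Z k \<omega>)) \<partial>M) = (\<Sum>k. \<integral>\<^sup>+\<omega>. ennreal (Z k \<omega>) \<partial>M)"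
    by (rule nn_integral_suminf) measurable
  also have "\<dots> = (\<Sum>k. ennreal (u k))"
    using ui Z0 unfolding u_def Z_def by (intro suminf_cong nn_integral_eq_integral) auto
  also have "\<dots> = ennreal (suminf u)" using u0 summ by (rule suminf_ennreal2)
  finally have "(\<integral>\<^sup>+\<omega>. (\<Sum>k. ennreal (Z k \<omega>)) \<partial>M) \<noteq> \<infinity>" by simp
  hence "AE \<omega> in M. (\<Sum>k. ennreal (Z k \<omega>)) \<noteq> \<infinity>" by (intro nn_integral_noteq_infinite) measurable
  thus ?thesis
  proof (rule AE_mp, intro AE_I2 impI)
    fix \<omega> assume \<omega>: "\<omega> \<in> space M" and fin: "(\<Sum>k. ennreal (Z k \<omega>)) \<noteq> \<infinity>" and E: "\<omega> \<in> E R"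
    have "summable (\<lambda>k. Z k \<omega>)" using Z0 fin by (intro summable_suminf_not_top) auto
    hence Zt: "(\<lambda>k. Z k \<omega>) \<longlonglongrightarrow> 0" by (rule summable_LIMSEQ_zero)
    have Zeq: "Z k \<omega> = V k \<omega> ^ n" for k unfolding Z_def using E by simp
    show "(\<lambda>k. x k \<omega>) \<longlonglongrightarrow> xs"
    proof (rule LIMSEQ_I)
      fix r :: real assume r: "r > 0"
      have "eventually (\<lambda>k. Z k \<omega> < (c1 * r^2)^n) sequentially"
        using order_tendstoD(2)[OF Zt, of "(c1 * r^2)^n"] r c1p by auto
      then obtain N where N: "\<And>k. k \<ge> N \<Longrightarrow> Z k \<omega> < (c1 * r^2)^n" unfolding eventually_sequentially by blast
      show "\<exists>no. \<forall>k\<ge>no. norm (x k \<omega> - xs) < r"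
      proof (intro exI allI impI)
        fix k assume "k \<ge> N"
        hence "V k \<omega> ^ n < (c1 * r^2)^n" using N Zeq by metis
        hence "V k \<omega> < c1 * r^2" by (rule power_less_imp_less_base) (use r c1p in simp)
        hence "c1 * (norm (x k \<omega> - xs))^2 < c1 * r^2" using V_lower[of k \<omega>] by linarith
        hence "(norm (x k \<omega> - xs))^2 < r^2" using c1p by simp
        thus "norm (x k \<omega> - xs) < r" using r by (simp add: power_less_imp_less_base)
      qed
    qed
  qed
qed

end

theorem corollary2:
  fixes M :: "'a measure"
    and x w :: "nat \<Rightarrow> 'a \<Rightarrow> 'd::euclidean_space"
    and H :: "'d \<Rightarrow> 'd"
    and xs :: "'d"
    and \<Phi> :: "'d \<Rightarrow> real" and grad\<Phi> :: "'d \<Rightarrow> 'd"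
    and \<eta> c1 c2 L2 C :: real
    and \<alpha>0 K \<xi> :: real
  assumes prob: "prob_space M"
    and x_meas: "\<And>k. x k \<in> borel_measurable M"
    and w_meas: "\<And>k. w k \<in> borel_measurable M"
    and iter: "\<And>k \<omega>. \<omega> \<in> space M \<Longrightarrow>
        x (Suc k) \<omega> = x k \<omega> + (\<alpha>0 * (real k + K) powr (- \<xi>)) *\<^sub>R (H (x k \<omega>) - x k \<omega> + w k \<omega>)"
    and alpha_pos: "\<alpha>0 > 0" and K_pos: "K > 0" and xi: "0 < \<xi>" "\<xi> \<le> 1"
    \<comment> \<open>Drift Assumption\<close>
    and fixpt: "H xs = xs"
    and Phi_nonneg: "\<And>y. \<Phi> y \<ge> 0"
    and Phi_grad: "\<And>y. (\<Phi> has_derivative (\<lambda>h. grad\<Phi> y \<bullet> h)) (at y)"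
    and consts_pos: "\<eta> > 0" "c1 > 0" "c2 > 0" "L2 > 0"
    and drift: "\<And>y. grad\<Phi> (y - xs) \<bullet> (H y - y) \<le> - \<eta> * \<Phi> (y - xs)"
    and smooth: "\<And>y z. \<Phi> z \<le> \<Phi> y + grad\<Phi> y \<bullet> (z - y) + L2 / 2 * (norm (z - y))\<^sup>2"
    and equiv: "\<And>y. c1 * (norm (y - xs))\<^sup>2 \<le> \<Phi> (y - xs)"
               "\<And>y. \<Phi> (y - xs) \<le> c2 * (norm (y - xs))\<^sup>2"
    \<comment> \<open>Unbiased Noise Assumption (conditional expectation taken componentwise)\<close>
    and w_int: "\<And>k. integrable M (w k)"
    and unbiased: "\<And>k b. b \<in> Basis \<Longrightarrow>
        AE \<omega> in M. real_cond_exp M (natural_filtration M x k) (\<lambda>\<omega>. w k \<omega> \<bullet> b) \<omega> = 0"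
    \<comment> \<open>p-th Moment Noise Assumption, for every p > 1\<close>
    and moments: "\<And>p::real. p > 1 \<Longrightarrow> \<exists>A B. A > 0 \<and> B \<ge> 0 \<and> (\<forall>k. AE \<omega> in M.
        nn_cond_exp M (natural_filtration M x k) (\<lambda>\<omega>. ennreal (norm (w k \<omega>) powr p)) \<omega>
          \<le> ennreal (A + B * norm (x k \<omega> - xs) powr p))"
    \<comment> \<open>Lipschitz Assumption\<close>
    and C_pos: "C > 0"
    and lipschitz: "\<And>y z. norm (H y - H z) \<le> C * norm (y - z)"
  shows "AE \<omega> in M. (\<lambda>k. x k \<omega>) \<longlonglongrightarrow> xs"
proof -
  interpret sa M x w H xs \<Phi> grad\<Phi> \<eta> c1 c2 L2 C \<alpha>0 K \<xi>
    by (rule sa.intro) (fact assms)+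
  have "\<forall>R::nat. AE \<omega> in M. \<omega> \<in> E (real R) \<longrightarrow> (\<lambda>k. x k \<omega>) \<longlonglongrightarrow> xs"
    using conv_on_E by blast
  hence "AE \<omega> in M. \<forall>R::nat. \<omega> \<in> E (real R) \<longrightarrow> (\<lambda>k. x k \<omega>) \<longlonglongrightarrow> xs"
    by (rule AE_all_countable[THEN iffD2])
  thus ?thesis
  proof (rule AE_mp, intro AE_I2 impI)
    fix \<omega> assume \<omega>: "\<omega> \<in> space M" and H: "\<forall>R::nat. \<omega> \<in> E (real R) \<longrightarrow> (\<lambda>k. x k \<omega>) \<longlonglongrightarrow> xs"
    have "norm (x 0 \<omega> - xs) \<le> real (nat \<lceil>norm (x 0 \<omega> - xs)\<rceil>)" by linarith
    hence "\<omega> \<in> E (real (nat \<lceil>norm (x 0 \<omega> - xs)\<rceil>))" using \<omega> unfolding E_def by simp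
    thus "(\<lambda>k. x k \<omega>) \<longlonglongrightarrow> xs" using H by blast
  qed
qed

end
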